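(* Let $(X_1,\dots,X_M)$ have density $f\in\mathrm{MMEam}$ of the form $f(x_1,\dots,x_M)=\sum_{\mathbf i\in\mathscr S}p_{\mathbf i}f_{i_1}(x_1)\cdots f_{i_M}(x_M)$. Then the density $f_S$ of $S=\sum_{j=1}^MX_j$ belongs to $\mathrm{MEam}$ and is given by $$f_S(y)=\sum_{\mathbf i\in\mathscr S}p_{\mathbf i}\,\alpha_{\mathbf i}e^{T_{\mathbf i}y}t_{\mathbf i},\qquad y\ge0,$$ where $\alpha_{\mathbf i}=(\alpha_{i_1},0,\dots,0)$, $t_{\mathbf i}=(0,\dots,0,t_{i_M}^\top)^\top$, and $T_{\mathbf i}$ is the $M\times M$ block upper bidiagonal matrix with diagonal blocks $T_{i_1},\dots,T_{i_M}$, blocks $t_{i_k}\alpha_{i_{k+1}}$ in position $(k,k+1)$ for $1\le k\le M-1$, and zero blocks elsewhere.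
   Context: An ME density is a probability density on $[0,\infty)$ of the form $g(x)=\alpha e^{Tx}t$ ($\alpha$ real row vector, $T$ real square matrix, $t$ real column vector). $\mathrm{MEam}$ is the class of nonnegative functions $\sum_{k=1}^K c_kg_k$ with $g_k$ ME densities, $c_k\in\mathbb R$, $\sum c_k=1$. MMEam: fix $L,M\in\mathbb N_+$ and ME densities $f_1,\dots,f_L$ with triples $(\alpha_j,T_j,t_j)$. Let $\mathscr S=\{1,\dots,L\}^M$, $\mathbf i=(i_1,\dots,i_M)$, and real numbers $p_{\mathbf i}$ (possibly negative) with $\sum p_{\mathbf i}=1$; $f(x)=\sum_{\mathbf i}p_{\mathbf i}f_{i_1}(x_1)\cdots f_{i_M}(x_M)$ on $[0,\infty)^M$ is an MMEam density if $f\ge0$. *)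

theory Defs
  imports "HOL-Probability.Probability" "Jordan_Normal_Form.Matrix"
begin

definition mexp :: "real mat \<Rightarrow> real mat" where
  "mexp A = Matrix.mat (dim_row A) (dim_col A)
     (\<lambda>(i,j). \<Sum>k. (A ^\<^sub>m k) $$ (i,j) / fact k)"

definition me_fun :: "real vec \<Rightarrow> real mat \<Rightarrow> real vec \<Rightarrow> real \<Rightarrow> real" where
  "me_fun a T t x = (if 0 \<le> x then scalar_prod a (mexp (x \<cdot>\<^sub>m T) *\<^sub>v t) else 0)"

definition me_density :: "(real \<Rightarrow> real) \<Rightarrow> bool" where
  "me_density g \<longleftrightarrow> (\<exists>n a T t. a \<in> carrier_vec n \<and> T \<in> carrier_mat n n \<and> t \<in> carrier_vec n
      \<and> g = me_fun a T t \<and> (\<forall>x. 0 \<le> g x) \<and> (g has_integral 1) {0..})"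

definition MEam :: "(real \<Rightarrow> real) \<Rightarrow> bool" where
  "MEam h \<longleftrightarrow> (\<forall>y. 0 \<le> h y) \<and>
     (\<exists>(K::nat) (c::nat \<Rightarrow> real) (g::nat \<Rightarrow> real \<Rightarrow> real).
        (\<forall>k<K. me_density (g k)) \<and> (\<Sum>k<K. c k) = 1 \<and> (\<forall>y. h y = (\<Sum>k<K. c k * g k y)))"

definition outer_vec :: "real vec \<Rightarrow> real vec \<Rightarrow> real mat" where
  "outer_vec t a = Matrix.mat (dim_vec t) (dim_vec a) (\<lambda>(i,j). t $ i * a $ j)"

definition blk_dim :: "(nat \<Rightarrow> real mat) \<Rightarrow> nat list \<Rightarrow> nat" where
  "blk_dim Tm is = sum_list (map (\<lambda>j. dim_row (Tm j)) is)"

fun big_alpha :: "(nat \<Rightarrow> real vec) \<Rightarrow> (nat \<Rightarrow> real mat) \<Rightarrow> nat list \<Rightarrow> real vec" where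
  "big_alpha al Tm [] = 0\<^sub>v 0"
| "big_alpha al Tm (j # rest) = al j @\<^sub>v 0\<^sub>v (blk_dim Tm rest)"

fun big_t :: "(nat \<Rightarrow> real vec) \<Rightarrow> (nat \<Rightarrow> real mat) \<Rightarrow> nat list \<Rightarrow> real vec" where
  "big_t tv Tm [] = 0\<^sub>v 0"
| "big_t tv Tm [j] = tv j"
| "big_t tv Tm (j # k # rest) = 0\<^sub>v (dim_row (Tm j)) @\<^sub>v big_t tv Tm (k # rest)"

text \<open>T_i: block upper bidiagonal, diagonal blocks T_{i_k}, superdiagonal blocks
  t_{i_k} alpha_{i_{k+1}}, zero elsewhere (built recursively: the upper right block of
  the first block row is t_{i_1} (alpha_{i_2},0,...,0)).\<close>
fun big_T :: "(nat \<Rightarrow> real vec) \<Rightarrow> (nat \<Rightarrow> real mat) \<Rightarrow> (nat \<Rightarrow> real vec) \<Rightarrow> nat list \<Rightarrow> real mat" where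
  "big_T al Tm tv [] = 0\<^sub>m 0 0"
| "big_T al Tm tv [j] = Tm j"
| "big_T al Tm tv (j # k # rest) =
     four_block_mat (Tm j) (outer_vec (tv j) (big_alpha al Tm (k # rest)))
       (0\<^sub>m (blk_dim Tm (k # rest)) (dim_row (Tm j))) (big_T al Tm tv (k # rest))"

end

theory Submission
  imports Defs
begin

definition ser :: "(nat \<Rightarrow> real) \<Rightarrow> real \<Rightarrow> real" where
  "ser c y = (\<Sum>k. c k * y ^ k / fact k)"

definition gbound :: "(nat \<Rightarrow> real) \<Rightarrow> bool" where
  "gbound c \<longleftrightarrow> (\<exists>K C. 0 \<le> C \<and> (\<forall>k. \<bar>c k\<bar> \<le> K * C ^ k))"

lemma ser_summable_norm:
  assumes "gbound c"
  shows "summable (\<lambda>k. norm (c k * y ^ k / fact k))"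
proof -
  obtain K C where C: "0 \<le> C" and b: "\<And>k. \<bar>c k\<bar> \<le> K * C ^ k"
    using assms unfolding gbound_def by blast
  have s: "summable (\<lambda>k. K * (inverse (fact k) * (C * \<bar>y\<bar>) ^ k))"
    by (intro summable_mult summable_exp)
  show ?thesis
  proof (rule summable_comparison_test'[OF s])
    fix k :: nat
    have "norm (c k * y ^ k / fact k) = \<bar>c k\<bar> * \<bar>y\<bar> ^ k / fact k"
      by (simp add: abs_mult power_abs)
    also have "\<dots> \<le> K * C ^ k * \<bar>y\<bar> ^ k / fact k"
      by (intro divide_right_mono mult_right_mono b) auto
    also have "\<dots> = K * (inverse (fact k) * (C * \<bar>y\<bar>) ^ k)"
      unfolding power_mult_distrib divide_inverse by (simp only: mult_ac)
    finally show "norm (norm (c k * y ^ k / fact k)) \<le> K * (inverse (fact k) * (C * \<bar>y\<bar>) ^ k)"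
      by simp
  qed
qed

lemma ser_summable: "gbound c \<Longrightarrow> summable (\<lambda>k. c k * y ^ k / fact k)"
  by (rule summable_norm_cancel[OF ser_summable_norm])

lemma deriv_pf:
  "((\<lambda>s. s ^ Suc n / fact (Suc n)) has_real_derivative (x::real) ^ n / fact n) (at x within S)"
proof -
  have "((\<lambda>s. s ^ Suc n / fact (Suc n)) has_real_derivative real (Suc n) * x ^ (Suc n - Suc 0) / fact (Suc n)) (at x within S)"
    by (intro DERIV_cdivide DERIV_pow)
  moreover have "real (Suc n) * x ^ (Suc n - Suc 0) / fact (Suc n) = x ^ n / fact n"
    by (simp add: fact_Suc del: of_nat_Suc)
  ultimately show ?thesis by simp
qed

lemma deriv_pf2:
  "((\<lambda>s. (y - s) ^ Suc n / fact (Suc n)) has_real_derivative - ((y - (x::real)) ^ n / fact n)) (at x within S)"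
proof -
  have "((\<lambda>s. (\<lambda>z. z ^ Suc n / fact (Suc n)) (y - s)) has_real_derivative ((y - x) ^ n / fact n) * (0 - 1)) (at x within S)"
    by (rule DERIV_chain2[OF deriv_pf], intro DERIV_diff DERIV_const DERIV_ident)
  then show ?thesis by simp
qed

lemma beta_integral:
  fixes y :: real
  assumes y: "0 \<le> y"
  shows "((\<lambda>s. (y - s) ^ a / fact a * (s ^ b / fact b)) has_integral y ^ (a + b + 1) / fact (a + b + 1)) {0..y}"
proof (induction a arbitrary: b)
  case 0
  have "((\<lambda>s. s ^ b / fact b) has_integral (y ^ (Suc b) / fact (Suc b) - 0 ^ (Suc b) / fact (Suc b))) {0..y}"
  proof (rule fundamental_theorem_of_calculus[OF y])
    fix x :: real assume "x \<in> {0..y}"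
    show "((\<lambda>s. s ^ Suc b / fact (Suc b)) has_vector_derivative x ^ b / fact b) (at x within {0..y})"
      using deriv_pf has_real_derivative_iff_has_vector_derivative by metis
  qed
  then show ?case by simp
next
  case (Suc a)
  define h where "h s = (y - s) ^ Suc a / fact (Suc a) * (s ^ Suc b / fact (Suc b))" for s
  define h' where "h' s = (y - s) ^ Suc a / fact (Suc a) * (s ^ b / fact b) - (y - s) ^ a / fact a * (s ^ Suc b / fact (Suc b))" for s
  have "(h' has_integral (h y - h 0)) {0..y}"
  proof (rule fundamental_theorem_of_calculus[OF y])
    fix x :: real assume "x \<in> {0..y}"
    have "(h has_real_derivative
        (- ((y - x) ^ a / fact a)) * (x ^ Suc b / fact (Suc b)) + (x ^ b / fact b) * ((y - x) ^ Suc a / fact (Suc a))) (at x within {0..y})"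
      unfolding h_def by (rule DERIV_mult[OF deriv_pf2 deriv_pf])
    moreover have "(- ((y - x) ^ a / fact a)) * (x ^ Suc b / fact (Suc b)) + (x ^ b / fact b) * ((y - x) ^ Suc a / fact (Suc a)) = h' x"
      unfolding h'_def by (simp add: algebra_simps)
    ultimately show "(h has_vector_derivative h' x) (at x within {0..y})"
      using has_real_derivative_iff_has_vector_derivative by metis
  qed
  moreover have "h y - h 0 = 0" unfolding h_def by simp
  ultimately have i1: "(h' has_integral 0) {0..y}" by simp
  have i2: "((\<lambda>s. (y - s) ^ a / fact a * (s ^ Suc b / fact (Suc b))) has_integral y ^ (a + Suc b + 1) / fact (a + Suc b + 1)) {0..y}"
    using Suc.IH[of "Suc b"] .
  have "((\<lambda>s. h' s + (y - s) ^ a / fact a * (s ^ Suc b / fact (Suc b))) has_integral 0 + y ^ (a + Suc b + 1) / fact (a + Suc b + 1)) {0..y}"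
    by (rule has_integral_add[OF i1 i2])
  moreover have "(\<lambda>s. h' s + (y - s) ^ a / fact a * (s ^ Suc b / fact (Suc b))) = (\<lambda>s. (y - s) ^ Suc a / fact (Suc a) * (s ^ b / fact b))"
    unfolding h'_def by auto
  ultimately show ?case by simp
qed

lemma gbound_abs: "gbound c \<Longrightarrow> gbound (\<lambda>k. \<bar>c k\<bar>)"
  unfolding gbound_def by auto

lemma ser_conv:
  fixes u v :: "nat \<Rightarrow> real" and y :: real
  assumes gu: "gbound u" and gv: "gbound v" and y: "0 \<le> y"
  defines "w \<equiv> (\<lambda>k. case k of 0 \<Rightarrow> 0 | Suc k \<Rightarrow> \<Sum>i\<le>k. u i * v (k - i))"
  shows "integrable lborel (\<lambda>s. ser u (y - s) * ser v s * indicator {0..y} s)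
    \<and> (LINT s|lborel. ser u (y - s) * ser v s * indicator {0..y} s) = ser w y"
proof -
  define a where "a i s = u i * (y - s) ^ i / fact i" for i s
  define b where "b j s = v j * s ^ j / fact j" for j s
  define G where "G k s = (\<Sum>i\<le>k. a i s * b (k - i) s)" for k s
  define F where "F k s = G k s * indicator {0..y} s" for k s
  define a' where "a' i = norm (u i * y ^ i / fact i)" for i
  define b' where "b' j = norm (v j * y ^ j / fact j)" for j
  define B where "B k = (\<Sum>i\<le>k. a' i * b' (k - i))" for k
  have sa': "summable a'" unfolding a'_def by (rule ser_summable_norm[OF gu])
  have sb': "summable b'" unfolding b'_def by (rule ser_summable_norm[OF gv])
  have a'nn: "0 \<le> a' i" for i unfolding a'_def by simp
  have b'nn: "0 \<le> b' i" for i unfolding b'_def by simp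
  have sB: "summable B"
  proof -
    have "summable (\<lambda>k. \<Sum>i\<le>k. a' i * b' (k - i))"
      by (rule summable_Cauchy_product) (use sa' sb' a'nn b'nn in auto)
    then show ?thesis unfolding B_def .
  qed
  have Bnn: "0 \<le> B k" for k unfolding B_def by (intro sum_nonneg mult_nonneg_nonneg a'nn b'nn)
  have absa: "\<bar>a i s\<bar> \<le> a' i" if "s \<in> {0..y}" for i s
  proof -
    have "\<bar>a i s\<bar> = \<bar>u i\<bar> * (y - s) ^ i / fact i" using that unfolding a_def
      by (simp add: abs_mult)
    also have "\<dots> \<le> \<bar>u i\<bar> * y ^ i / fact i"
      using that by (intro divide_right_mono mult_left_mono power_mono) auto
    also have "\<dots> = a' i" unfolding a'_def using y by (simp add: abs_mult)
    finally show ?thesis .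
  qed
  have absb: "\<bar>b j s\<bar> \<le> b' j" if "s \<in> {0..y}" for j s
  proof -
    have "\<bar>b j s\<bar> = \<bar>v j\<bar> * s ^ j / fact j" using that unfolding b_def
      by (simp add: abs_mult)
    also have "\<dots> \<le> \<bar>v j\<bar> * y ^ j / fact j"
      using that by (intro divide_right_mono mult_left_mono power_mono) auto
    also have "\<dots> = b' j" unfolding b'_def using y by (simp add: abs_mult)
    finally show ?thesis .
  qed
  have Fbound: "\<bar>F k s\<bar> \<le> B k * indicator {0..y} s" for k s
  proof (cases "s \<in> {0..y}")
    case True
    have "\<bar>G k s\<bar> \<le> (\<Sum>i\<le>k. \<bar>a i s * b (k - i) s\<bar>)" unfolding G_def by (rule sum_abs)
    also have "\<dots> \<le> B k" unfolding B_def
    proof (rule sum_mono)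
      fix i assume "i \<in> {..k}"
      show "\<bar>a i s * b (k - i) s\<bar> \<le> a' i * b' (k - i)"
        unfolding abs_mult by (intro mult_mono absa absb True a'nn) auto
    qed
    finally show ?thesis using True unfolding F_def by simp
  next
    case False then show ?thesis unfolding F_def by simp
  qed
  have contG: "isCont (G k) s" for k s
    unfolding G_def a_def b_def by (intro continuous_intros) auto
  have intF: "integrable lborel (F k)" for k
    unfolding F_def by (rule borel_integrable_atLeastAtMost) (rule contG)
  have intB: "integrable lborel (\<lambda>s. B k * indicator {0..y} s)" for k
    by (rule borel_integrable_atLeastAtMost) auto
  have intnormF: "(LINT s|lborel. norm (F k s)) \<le> B k * y" for k
  proof -
    have "(LINT s|lborel. norm (F k s)) \<le> (LINT s|lborel. B k * indicator {0..y} s)"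
      by (rule integral_mono) (use intF[of k] intB[of k] Fbound in auto)
    also have "\<dots> = B k * y" using y by simp
    finally show ?thesis .
  qed
  have sumnormF: "summable (\<lambda>k. LINT s|lborel. norm (F k s))"
  proof (rule summable_comparison_test'[of "\<lambda>k. B k * y"])
    show "summable (\<lambda>k. B k * y)" by (rule summable_mult2[OF sB])
    fix k
    have "0 \<le> (LINT s|lborel. norm (F k s))" by simp
    then show "norm (LINT s|lborel. norm (F k s)) \<le> B k * y" using intnormF[of k] by simp
  qed
  have AEsum: "AE s in lborel. summable (\<lambda>k. norm (F k s))"
  proof (rule AE_I2)
    fix s
    show "summable (\<lambda>k. norm (F k s))"
    proof (rule summable_comparison_test'[of "\<lambda>k. B k * indicator {0..y} s"])
      show "summable (\<lambda>k. B k * indicator {0..y} s)" by (rule summable_mult2[OF sB])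
      show "norm (norm (F k s)) \<le> B k * indicator {0..y} s" for k using Fbound[of k s] by simp
    qed
  qed
  have pointwise: "ser u (y - s) * ser v s * indicator {0..y} s = (\<Sum>k. F k s)" for s
  proof -
    have "ser u (y - s) * ser v s = (\<Sum>k. G k s)"
    proof -
      have "ser u (y - s) * ser v s = (\<Sum>k. a k s) * (\<Sum>k. b k s)"
        unfolding ser_def a_def b_def by simp
      also have "\<dots> = (\<Sum>k. \<Sum>i\<le>k. a i s * b (k - i) s)"
        by (rule Cauchy_product) (unfold a_def b_def, rule ser_summable_norm[OF gu], rule ser_summable_norm[OF gv])
      finally show ?thesis unfolding G_def .
    qed
    moreover have "summable (\<lambda>k. G k s)"
    proof -
      have "summable (\<lambda>k. \<Sum>i\<le>k. a i s * b (k - i) s)"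
        by (rule summable_Cauchy_product) (unfold a_def b_def, rule ser_summable_norm[OF gu], rule ser_summable_norm[OF gv])
      then show ?thesis unfolding G_def .
    qed
    ultimately show ?thesis unfolding F_def by (simp add: suminf_mult2)
  qed
  have intsum: "integrable lborel (\<lambda>s. \<Sum>k. F k s)"
    by (rule integrable_suminf[OF intF AEsum sumnormF])
  have eqsum: "(LINT s|lborel. (\<Sum>k. F k s)) = (\<Sum>k. LINT s|lborel. F k s)"
    by (rule integral_suminf[OF intF AEsum sumnormF])
  have intFk: "(LINT s|lborel. F k s) = w (Suc k) * y ^ Suc k / fact (Suc k)" for k
  proof -
    have h1: "(G k has_integral (\<Sum>i\<le>k. u i * v (k - i) * (y ^ (i + (k - i) + 1) / fact (i + (k - i) + 1)))) {0..y}"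
      unfolding G_def
    proof (rule has_integral_sum)
      fix i assume "i \<in> {..k}"
      have "((\<lambda>s. ((y - s) ^ i / fact i * (s ^ (k - i) / fact (k - i))) * (u i * v (k - i))) has_integral
          (y ^ (i + (k - i) + 1) / fact (i + (k - i) + 1)) * (u i * v (k - i))) {0..y}"
        by (rule has_integral_mult_left[OF beta_integral[OF y]])
      moreover have "(\<lambda>s. ((y - s) ^ i / fact i * (s ^ (k - i) / fact (k - i))) * (u i * v (k - i))) = (\<lambda>s. a i s * b (k - i) s)"
        unfolding a_def b_def by (auto simp: fun_eq_iff)
      ultimately show "((\<lambda>s. a i s * b (k - i) s) has_integral u i * v (k - i) * (y ^ (i + (k - i) + 1) / fact (i + (k - i) + 1))) {0..y}"
        by (simp add: mult.commute)
    qed auto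
    have "(\<Sum>i\<le>k. u i * v (k - i) * (y ^ (i + (k - i) + 1) / fact (i + (k - i) + 1))) =
          (\<Sum>i\<le>k. u i * v (k - i) * (y ^ Suc k / fact (Suc k)))"
      by (intro sum.cong) auto
    also have "\<dots> = w (Suc k) * y ^ Suc k / fact (Suc k)"
      unfolding w_def by (simp add: sum_distrib_right sum_divide_distrib del: fact_Suc power_Suc of_nat_Suc)
    finally have h1': "(G k has_integral w (Suc k) * y ^ Suc k / fact (Suc k)) {0..y}" using h1 by simp
    have "(F k has_integral (LINT s|lborel. F k s)) UNIV"
      by (rule has_integral_integral_lborel[OF intF])
    moreover have "F k = (\<lambda>s. if s \<in> {0..y} then G k s else 0)"
      unfolding F_def by (auto simp: fun_eq_iff)
    ultimately have "(G k has_integral (LINT s|lborel. F k s)) {0..y}"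
      using has_integral_restrict_UNIV by metis
    then show ?thesis using h1' by (rule has_integral_unique)
  qed
  have sw: "summable (\<lambda>k. w k * y ^ k / fact k)"
  proof -
    have "summable (\<lambda>k. LINT s|lborel. F k s)"
    proof (rule summable_comparison_test'[OF sumnormF])
      show "norm (LINT s|lborel. F k s) \<le> (LINT s|lborel. norm (F k s))" for k
        by (rule integral_norm_bound)
    qed
    then have "summable (\<lambda>k. w (Suc k) * y ^ Suc k / fact (Suc k))" using intFk by simp
    then show ?thesis using summable_Suc_iff[of "\<lambda>k. w k * y ^ k / fact k"] by simp
  qed
  have "(\<Sum>k. LINT s|lborel. F k s) = (\<Sum>k. w (Suc k) * y ^ Suc k / fact (Suc k))"
    using intFk by simp
  also have "\<dots> = ser w y"
    unfolding ser_def using suminf_split_head[OF sw] by (simp add: w_def)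
  finally have "(\<Sum>k. LINT s|lborel. F k s) = ser w y" .
  with intsum eqsum pointwise show ?thesis by simp
qed

lemma ser_isCont:
  assumes "gbound c"
  shows "isCont (ser c) x"
proof -
  have eq: "ser c = (\<lambda>y. \<Sum>k. (c k / fact k) * y ^ k)"
    unfolding ser_def by (auto simp: fun_eq_iff)
  have "summable (\<lambda>k. c k * (\<bar>x\<bar> + 1) ^ k / fact k)" by (rule ser_summable[OF assms])
  then have s: "summable (\<lambda>k. (c k / fact k) * (\<bar>x\<bar> + 1) ^ k)" by simp
  show ?thesis unfolding eq by (rule isCont_powser[OF s]) simp
qed

lemma ser_sum:
  assumes "finite I" and "\<And>i. i \<in> I \<Longrightarrow> summable (\<lambda>k. f i k * y ^ k / fact k)"
  shows "ser (\<lambda>k. \<Sum>i\<in>I. f i k) y = (\<Sum>i\<in>I. ser (f i) y)"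
proof -
  have "ser (\<lambda>k. \<Sum>i\<in>I. f i k) y = (\<Sum>k. \<Sum>i\<in>I. f i k * y ^ k / fact k)"
    unfolding ser_def by (simp add: sum_distrib_right sum_divide_distrib)
  also have "\<dots> = (\<Sum>i\<in>I. \<Sum>k. f i k * y ^ k / fact k)"
    by (rule suminf_sum) (use assms in auto)
  finally show ?thesis unfolding ser_def .
qed

lemma ser_cmult: "ser (\<lambda>k. a * f k) y = a * ser f y" if "summable (\<lambda>k. f k * y ^ k / fact k)"
proof -
  have "ser (\<lambda>k. a * f k) y = (\<Sum>k. a * (f k * y ^ k / fact k))"
    unfolding ser_def by (simp add: mult.assoc)
  also have "\<dots> = a * ser f y" unfolding ser_def by (rule suminf_mult[OF that])
  finally show ?thesis .
qed

lemma pow_smult_entry: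
  fixes A :: "real mat"
  assumes A: "A \<in> carrier_mat n n"
  shows "i < n \<Longrightarrow> j < n \<Longrightarrow> ((c \<cdot>\<^sub>m A) ^\<^sub>m k) $$ (i,j) = c ^ k * (A ^\<^sub>m k) $$ (i,j)"
proof (induction k arbitrary: i j)
  case 0
  then show ?case using A by simp
next
  case (Suc k)
  have cA: "c \<cdot>\<^sub>m A \<in> carrier_mat n n" using A by simp
  have dA: "dim_row A = n" "dim_col A = n" using A by auto
  have "((c \<cdot>\<^sub>m A) ^\<^sub>m Suc k) $$ (i,j) = row ((c \<cdot>\<^sub>m A) ^\<^sub>m k) i \<bullet> col (c \<cdot>\<^sub>m A) j"
    using Suc.prems dA by simp
  also have "\<dots> = (\<Sum>l<n. ((c \<cdot>\<^sub>m A) ^\<^sub>m k) $$ (i,l) * (c \<cdot>\<^sub>m A) $$ (l,j))"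
    using Suc.prems dA by (auto intro!: sum.cong simp: lessThan_atLeast0 scalar_prod_def)
  also have "\<dots> = (\<Sum>l<n. (c ^ k * (A ^\<^sub>m k) $$ (i,l)) * (c * A $$ (l,j)))"
    using Suc.prems A by (intro sum.cong refl) (simp add: Suc.IH)
  also have "\<dots> = c ^ Suc k * (\<Sum>l<n. (A ^\<^sub>m k) $$ (i,l) * A $$ (l,j))"
    by (simp add: sum_distrib_left mult_ac)
  also have "(\<Sum>l<n. (A ^\<^sub>m k) $$ (i,l) * A $$ (l,j)) = (A ^\<^sub>m Suc k) $$ (i,j)"
    using Suc.prems dA by (auto intro!: sum.cong simp: lessThan_atLeast0 scalar_prod_def)
  finally show ?case .
qed

lemma pow_entry_bound:
  fixes A :: "real mat"
  assumes A: "A \<in> carrier_mat n n" and B: "\<And>i j. i < n \<Longrightarrow> j < n \<Longrightarrow> \<bar>A $$ (i,j)\<bar> \<le> B" and B0: "0 \<le> B"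
  shows "i < n \<Longrightarrow> j < n \<Longrightarrow> \<bar>(A ^\<^sub>m k) $$ (i,j)\<bar> \<le> (real n * B + 1) ^ k"
proof (induction k arbitrary: i j)
  case 0
  then show ?case using A by simp
next
  case (Suc k)
  have dA: "dim_row A = n" "dim_col A = n" using A by auto
  have "(A ^\<^sub>m Suc k) $$ (i,j) = (\<Sum>l<n. (A ^\<^sub>m k) $$ (i,l) * A $$ (l,j))"
    using Suc.prems dA by (auto intro!: sum.cong simp: lessThan_atLeast0 scalar_prod_def)
  also have "\<bar>\<dots>\<bar> \<le> (\<Sum>l<n. \<bar>(A ^\<^sub>m k) $$ (i,l) * A $$ (l,j)\<bar>)" by (rule sum_abs)
  also have "\<dots> \<le> (\<Sum>l<n. (real n * B + 1) ^ k * B)"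
  proof (rule sum_mono)
    fix l assume "l \<in> {..<n}"
    then show "\<bar>(A ^\<^sub>m k) $$ (i,l) * A $$ (l,j)\<bar> \<le> (real n * B + 1) ^ k * B"
      unfolding abs_mult using Suc B0 by (intro mult_mono B) auto
  qed
  also have "\<dots> = real n * B * (real n * B + 1) ^ k" by simp
  also have "\<dots> \<le> (real n * B + 1) * (real n * B + 1) ^ k"
    using B0 by (intro mult_right_mono) auto
  finally show ?case by simp
qed

definition mcoef :: "real vec \<Rightarrow> real mat \<Rightarrow> real vec \<Rightarrow> nat \<Rightarrow> real" where
  "mcoef a A t k = a \<bullet> ((A ^\<^sub>m k) *\<^sub>v t)"

lemma mcoef_expand:
  assumes a: "a \<in> carrier_vec n" and A: "A \<in> carrier_mat n n" and t: "t \<in> carrier_vec n"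
  shows "mcoef a A t k = (\<Sum>i<n. \<Sum>j<n. a $ i * t $ j * (A ^\<^sub>m k) $$ (i,j))"
proof -
  have "mcoef a A t k = (\<Sum>i<n. a $ i * (\<Sum>j<n. (A ^\<^sub>m k) $$ (i,j) * t $ j))"
    unfolding mcoef_def using a A t
    by (auto intro!: sum.cong simp: lessThan_atLeast0 scalar_prod_def)
  also have "\<dots> = (\<Sum>i<n. \<Sum>j<n. a $ i * t $ j * (A ^\<^sub>m k) $$ (i,j))"
    by (simp add: sum_distrib_left mult_ac)
  finally show ?thesis .
qed

lemma entry_gbound:
  fixes A :: "real mat"
  assumes A: "A \<in> carrier_mat n n" and i: "i < n" and j: "j < n"
  shows "gbound (\<lambda>k. (A ^\<^sub>m k) $$ (i,j))"
proof -
  define B where "B = (\<Sum>i<n. \<Sum>j<n. \<bar>A $$ (i,j)\<bar>)"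
  have B0: "0 \<le> B" unfolding B_def by (intro sum_nonneg) auto
  have Bb: "\<bar>A $$ (i,j)\<bar> \<le> B" if "i < n" "j < n" for i j
  proof -
    have "\<bar>A $$ (i,j)\<bar> \<le> (\<Sum>j<n. \<bar>A $$ (i,j)\<bar>)"
      using that by (intro member_le_sum) auto
    also have "\<dots> \<le> B" unfolding B_def
      using that by (intro member_le_sum[where f="\<lambda>i. \<Sum>j<n. \<bar>A $$ (i,j)\<bar>"]) (auto intro: sum_nonneg)
    finally show ?thesis .
  qed
  show ?thesis unfolding gbound_def
    by (intro exI[of _ 1] exI[of _ "real n * B + 1"]) (use pow_entry_bound[OF A Bb B0 i j] B0 in auto)
qed

lemma mcoef_gbound:
  assumes a: "a \<in> carrier_vec n" and A: "A \<in> carrier_mat n n" and t: "t \<in> carrier_vec n"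
  shows "gbound (mcoef a A t)"
proof -
  define B where "B = (\<Sum>i<n. \<Sum>j<n. \<bar>A $$ (i,j)\<bar>)"
  have B0: "0 \<le> B" unfolding B_def by (intro sum_nonneg) auto
  have Bb: "\<bar>A $$ (i,j)\<bar> \<le> B" if "i < n" "j < n" for i j
  proof -
    have "\<bar>A $$ (i,j)\<bar> \<le> (\<Sum>j<n. \<bar>A $$ (i,j)\<bar>)"
      using that by (intro member_le_sum) auto
    also have "\<dots> \<le> B" unfolding B_def
      using that by (intro member_le_sum[where f="\<lambda>i. \<Sum>j<n. \<bar>A $$ (i,j)\<bar>"]) (auto intro: sum_nonneg)
    finally show ?thesis .
  qed
  define C where "C = real n * B + 1"
  define K where "K = (\<Sum>i<n. \<Sum>j<n. \<bar>a $ i * t $ j\<bar>)"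
  have "\<bar>mcoef a A t k\<bar> \<le> K * C ^ k" for k
  proof -
    have "\<bar>mcoef a A t k\<bar> \<le> (\<Sum>i<n. \<bar>\<Sum>j<n. a $ i * t $ j * (A ^\<^sub>m k) $$ (i,j)\<bar>)"
      unfolding mcoef_expand[OF a A t] by (rule sum_abs)
    also have "\<dots> \<le> (\<Sum>i<n. \<Sum>j<n. \<bar>a $ i * t $ j\<bar> * C ^ k)"
    proof (intro sum_mono order.trans[OF sum_abs])
      fix i j assume "i \<in> {..<n}" "j \<in> {..<n}"
      then show "\<bar>a $ i * t $ j * (A ^\<^sub>m k) $$ (i,j)\<bar> \<le> \<bar>a $ i * t $ j\<bar> * C ^ k"
        unfolding abs_mult[of "a $ i * t $ j"] C_def
        by (intro mult_left_mono pow_entry_bound[OF A Bb B0]) auto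
    qed
    also have "\<dots> = K * C ^ k" unfolding K_def by (simp add: sum_distrib_right)
    finally show ?thesis .
  qed
  moreover have "0 \<le> C" unfolding C_def using B0 by simp
  ultimately show ?thesis unfolding gbound_def by blast
qed

lemma me_fun_ser:
  assumes a: "a \<in> carrier_vec n" and A: "A \<in> carrier_mat n n" and t: "t \<in> carrier_vec n"
    and y: "0 \<le> y"
  shows "me_fun a A t y = ser (mcoef a A t) y"
proof -
  have yA: "y \<cdot>\<^sub>m A \<in> carrier_mat n n" using A by simp
  have ent: "mexp (y \<cdot>\<^sub>m A) $$ (i,j) = ser (\<lambda>k. (A ^\<^sub>m k) $$ (i,j)) y" if "i < n" "j < n" for i j
  proof -
    have "mexp (y \<cdot>\<^sub>m A) $$ (i,j) = (\<Sum>k. ((y \<cdot>\<^sub>m A) ^\<^sub>m k) $$ (i,j) / fact k)"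
      unfolding mexp_def using that A by auto
    also have "\<dots> = ser (\<lambda>k. (A ^\<^sub>m k) $$ (i,j)) y"
      unfolding ser_def using that by (simp add: pow_smult_entry[OF A] mult_ac)
    finally show ?thesis .
  qed
  have summ: "summable (\<lambda>k. (A ^\<^sub>m k) $$ (i,j) * y ^ k / fact k)" if "i < n" "j < n" for i j
    by (rule ser_summable[OF entry_gbound[OF A that]])
  have md: "mexp (y \<cdot>\<^sub>m A) \<in> carrier_mat n n" unfolding mexp_def using A by auto
  have "me_fun a A t y = (\<Sum>i<n. a $ i * (\<Sum>j<n. mexp (y \<cdot>\<^sub>m A) $$ (i,j) * t $ j))"
    unfolding me_fun_def using y a t md
    by (auto intro!: sum.cong simp: lessThan_atLeast0 scalar_prod_def)
  also have "\<dots> = (\<Sum>i<n. \<Sum>j<n. a $ i * t $ j * ser (\<lambda>k. (A ^\<^sub>m k) $$ (i,j)) y)"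
    by (auto intro!: sum.cong simp: sum_distrib_left ent mult_ac)
  also have "\<dots> = (\<Sum>i<n. \<Sum>j<n. ser (\<lambda>k. a $ i * t $ j * (A ^\<^sub>m k) $$ (i,j)) y)"
    by (auto intro!: sum.cong simp: ser_cmult summ)
  also have "\<dots> = (\<Sum>i<n. ser (\<lambda>k. \<Sum>j<n. a $ i * t $ j * (A ^\<^sub>m k) $$ (i,j)) y)"
  proof (intro sum.cong refl ser_sum[symmetric])
    fix i j assume "i \<in> {..<n}" "j \<in> {..<n}"
    then show "summable (\<lambda>k. a $ i * t $ j * (A ^\<^sub>m k) $$ (i,j) * y ^ k / fact k)"
      using summable_mult[OF summ, of i j "a $ i * t $ j"] by (simp add: mult_ac)
  qed auto
  also have "\<dots> = ser (\<lambda>k. \<Sum>i<n. \<Sum>j<n. a $ i * t $ j * (A ^\<^sub>m k) $$ (i,j)) y"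
  proof (intro ser_sum[symmetric])
    fix i assume "i \<in> {..<n}"
    show "summable (\<lambda>k. (\<Sum>j<n. a $ i * t $ j * (A ^\<^sub>m k) $$ (i,j)) * y ^ k / fact k)"
      unfolding sum_distrib_right sum_divide_distrib
    proof (intro summable_sum)
      fix j assume "j \<in> {..<n}"
      then show "summable (\<lambda>k. a $ i * t $ j * (A ^\<^sub>m k) $$ (i,j) * y ^ k / fact k)"
        using summable_mult[OF summ, of i j "a $ i * t $ j"] \<open>i \<in> {..<n}\<close> by (simp add: mult_ac)
    qed
  qed auto
  also have "\<dots> = ser (mcoef a A t) y"
  proof -
    have "(\<lambda>k. \<Sum>i<n. \<Sum>j<n. a $ i * t $ j * (A ^\<^sub>m k) $$ (i,j)) = mcoef a A t"
      by (rule ext) (rule mcoef_expand[OF a A t, symmetric])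
    then show ?thesis by simp
  qed
  finally show ?thesis .
qed

lemma pow_mat_Suc_left:
  fixes A :: "real mat"
  assumes A: "A \<in> carrier_mat n n"
  shows "A ^\<^sub>m Suc k = A * A ^\<^sub>m k"
proof (induction k)
  case 0
  then show ?case using A by simp
next
  case (Suc k)
  have "A ^\<^sub>m Suc (Suc k) = (A * A ^\<^sub>m k) * A" using Suc by simp
  also have "\<dots> = A * (A ^\<^sub>m k * A)" using A by (intro assoc_mult_mat) auto
  finally show ?case by simp
qed

lemma powvec_carrier[simp]: "A \<in> carrier_mat n n \<Longrightarrow> (A ^\<^sub>m k) *\<^sub>v v \<in> carrier_vec n"
  unfolding carrier_vec_def by simp

lemma outer_vec_carrier: "t \<in> carrier_vec n1 \<Longrightarrow> a \<in> carrier_vec n2 \<Longrightarrow> outer_vec t a \<in> carrier_mat n1 n2"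
  unfolding outer_vec_def by auto

lemma outer_vec_mult:
  assumes t: "t \<in> carrier_vec n1" and a: "a \<in> carrier_vec n2" and z: "z \<in> carrier_vec n2"
  shows "outer_vec t a *\<^sub>v z = (a \<bullet> z) \<cdot>\<^sub>v t"
proof (rule eq_vecI)
  show "dim_vec (outer_vec t a *\<^sub>v z) = dim_vec ((a \<bullet> z) \<cdot>\<^sub>v t)"
    using t a unfolding outer_vec_def by simp
  fix i assume "i < dim_vec ((a \<bullet> z) \<cdot>\<^sub>v t)"
  then have i: "i < n1" using t by simp
  have "(outer_vec t a *\<^sub>v z) $ i = (\<Sum>j = 0..<n2. t $ i * a $ j * z $ j)"
    using i t a z unfolding outer_vec_def by (auto simp: scalar_prod_def intro!: sum.cong)
  also have "\<dots> = (a \<bullet> z) * t $ i"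
    using z unfolding scalar_prod_def by (simp add: sum_distrib_left sum_distrib_right mult_ac)
  finally show "(outer_vec t a *\<^sub>v z) $ i = ((a \<bullet> z) \<cdot>\<^sub>v t) $ i" using i t by simp
qed

lemma block_pow_vec:
  fixes A D :: "real mat"
  assumes A: "A \<in> carrier_mat n1 n1" and D: "D \<in> carrier_mat n2 n2" and t1: "t1 \<in> carrier_vec n1"
    and al2: "al2 \<in> carrier_vec n2" and t2: "t2 \<in> carrier_vec n2"
  defines "T \<equiv> four_block_mat A (outer_vec t1 al2) (0\<^sub>m n2 n1) D"
  shows "\<exists>x \<in> carrier_vec n1. (T ^\<^sub>m k) *\<^sub>v (0\<^sub>v n1 @\<^sub>v t2) = x @\<^sub>v ((D ^\<^sub>m k) *\<^sub>v t2) \<and>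
     (\<forall>b \<in> carrier_vec n1. b \<bullet> x = (\<Sum>j<k. mcoef b A t1 (k - 1 - j) * mcoef al2 D t2 j))"
proof (induction k)
  case 0
  have "(T ^\<^sub>m 0) *\<^sub>v (0\<^sub>v n1 @\<^sub>v t2) = 0\<^sub>v n1 @\<^sub>v t2"
    unfolding T_def using A D t2 by (auto simp: outer_vec_carrier[OF t1 al2])
  moreover have "(D ^\<^sub>m 0) *\<^sub>v t2 = t2" using D t2 by auto
  ultimately show ?case by (intro bexI[of _ "0\<^sub>v n1"]) auto
next
  case (Suc k)
  then obtain x where x: "x \<in> carrier_vec n1" and eq: "(T ^\<^sub>m k) *\<^sub>v (0\<^sub>v n1 @\<^sub>v t2) = x @\<^sub>v ((D ^\<^sub>m k) *\<^sub>v t2)"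
    and bx: "\<And>b. b \<in> carrier_vec n1 \<Longrightarrow> b \<bullet> x = (\<Sum>j<k. mcoef b A t1 (k - 1 - j) * mcoef al2 D t2 j)"
    by blast
  have B: "outer_vec t1 al2 \<in> carrier_mat n1 n2" by (rule outer_vec_carrier[OF t1 al2])
  have TC: "T \<in> carrier_mat (n1 + n2) (n1 + n2)"
    unfolding T_def by (rule four_block_carrier_mat[OF A D])
  have v0: "0\<^sub>v n1 @\<^sub>v t2 \<in> carrier_vec (n1 + n2)" using t2 by simp
  have Dk: "(D ^\<^sub>m k) *\<^sub>v t2 \<in> carrier_vec n2" using D t2 by simp
  define x' where "x' = A *\<^sub>v x + (al2 \<bullet> ((D ^\<^sub>m k) *\<^sub>v t2)) \<cdot>\<^sub>v t1"
  have x'c: "x' \<in> carrier_vec n1" unfolding x'_def using A x t1 by simp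
  have "(T ^\<^sub>m Suc k) *\<^sub>v (0\<^sub>v n1 @\<^sub>v t2) = T *\<^sub>v ((T ^\<^sub>m k) *\<^sub>v (0\<^sub>v n1 @\<^sub>v t2))"
    unfolding pow_mat_Suc_left[OF TC] using TC v0 by (intro assoc_mult_mat_vec) auto
  also have "\<dots> = T *\<^sub>v (x @\<^sub>v ((D ^\<^sub>m k) *\<^sub>v t2))" using eq by simp
  also have "\<dots> = (A *\<^sub>v x + outer_vec t1 al2 *\<^sub>v ((D ^\<^sub>m k) *\<^sub>v t2)) @\<^sub>v
                  (0\<^sub>m n2 n1 *\<^sub>v x + D *\<^sub>v ((D ^\<^sub>m k) *\<^sub>v t2))"
    unfolding T_def by (rule four_block_mat_mult_vec[OF A B _ D x Dk]) simp
  also have "\<dots> = x' @\<^sub>v ((D ^\<^sub>m Suc k) *\<^sub>v t2)"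
  proof -
    have "outer_vec t1 al2 *\<^sub>v ((D ^\<^sub>m k) *\<^sub>v t2) = (al2 \<bullet> ((D ^\<^sub>m k) *\<^sub>v t2)) \<cdot>\<^sub>v t1"
      by (rule outer_vec_mult[OF t1 al2 Dk])
    moreover have "0\<^sub>m n2 n1 *\<^sub>v x + D *\<^sub>v ((D ^\<^sub>m k) *\<^sub>v t2) = (D ^\<^sub>m Suc k) *\<^sub>v t2"
    proof -
      have "0\<^sub>m n2 n1 *\<^sub>v x = 0\<^sub>v n2" using x by auto
      moreover have "D *\<^sub>v ((D ^\<^sub>m k) *\<^sub>v t2) = (D ^\<^sub>m Suc k) *\<^sub>v t2"
        unfolding pow_mat_Suc_left[OF D] using D t2 by (intro assoc_mult_mat_vec[symmetric]) auto
      moreover have "(D ^\<^sub>m Suc k) *\<^sub>v t2 \<in> carrier_vec n2" using D by (rule powvec_carrier)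
      ultimately show ?thesis by simp
    qed
    ultimately show ?thesis unfolding x'_def by simp
  qed
  finally have E: "(T ^\<^sub>m Suc k) *\<^sub>v (0\<^sub>v n1 @\<^sub>v t2) = x' @\<^sub>v ((D ^\<^sub>m Suc k) *\<^sub>v t2)" .
  have "b \<bullet> x' = (\<Sum>j<Suc k. mcoef b A t1 (Suc k - 1 - j) * mcoef al2 D t2 j)" if b: "b \<in> carrier_vec n1" for b
  proof -
    have Atb: "transpose_mat A *\<^sub>v b \<in> carrier_vec n1" using A b by simp
    have "b \<bullet> x' = b \<bullet> (A *\<^sub>v x) + b \<bullet> ((al2 \<bullet> ((D ^\<^sub>m k) *\<^sub>v t2)) \<cdot>\<^sub>v t1)"
      unfolding x'_def using b A x t1 by (intro scalar_prod_add_distrib) auto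
    also have "b \<bullet> (A *\<^sub>v x) = (transpose_mat A *\<^sub>v b) \<bullet> x"
      using transpose_vec_mult_scalar[OF A x b] by simp
    also have "\<dots> = (\<Sum>j<k. mcoef (transpose_mat A *\<^sub>v b) A t1 (k - 1 - j) * mcoef al2 D t2 j)"
      by (rule bx[OF Atb])
    also have "\<dots> = (\<Sum>j<k. mcoef b A t1 (Suc k - 1 - j) * mcoef al2 D t2 j)"
    proof (intro sum.cong refl)
      fix j assume j: "j \<in> {..<k}"
      have "mcoef (transpose_mat A *\<^sub>v b) A t1 (k - 1 - j) = b \<bullet> (A *\<^sub>v ((A ^\<^sub>m (k - 1 - j)) *\<^sub>v t1))"
        unfolding mcoef_def using A t1 b by (intro transpose_vec_mult_scalar) auto
      also have "A *\<^sub>v ((A ^\<^sub>m (k - 1 - j)) *\<^sub>v t1) = (A ^\<^sub>m Suc (k - 1 - j)) *\<^sub>v t1"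
        unfolding pow_mat_Suc_left[OF A] using A t1 by (intro assoc_mult_mat_vec[symmetric]) auto
      also have "Suc (k - 1 - j) = Suc k - 1 - j" using j by auto
      finally show "mcoef (transpose_mat A *\<^sub>v b) A t1 (k - 1 - j) * mcoef al2 D t2 j =
          mcoef b A t1 (Suc k - 1 - j) * mcoef al2 D t2 j" unfolding mcoef_def by simp
    qed
    also have "b \<bullet> ((al2 \<bullet> ((D ^\<^sub>m k) *\<^sub>v t2)) \<cdot>\<^sub>v t1) = mcoef b A t1 (Suc k - 1 - k) * mcoef al2 D t2 k"
      unfolding mcoef_def using b t1 A by simp
    finally show ?thesis by simp
  qed
  with x'c E show ?case by blast
qed

lemma block_mcoef:
  fixes A D :: "real mat"
  assumes A: "A \<in> carrier_mat n1 n1" and D: "D \<in> carrier_mat n2 n2" and t1: "t1 \<in> carrier_vec n1"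
    and al2: "al2 \<in> carrier_vec n2" and t2: "t2 \<in> carrier_vec n2" and a: "a \<in> carrier_vec n1"
  shows "mcoef (a @\<^sub>v 0\<^sub>v n2) (four_block_mat A (outer_vec t1 al2) (0\<^sub>m n2 n1) D) (0\<^sub>v n1 @\<^sub>v t2) k =
    (case k of 0 \<Rightarrow> 0 | Suc k \<Rightarrow> \<Sum>i\<le>k. mcoef a A t1 i * mcoef al2 D t2 (k - i))"
proof -
  obtain x where x: "x \<in> carrier_vec n1"
    and eq: "(four_block_mat A (outer_vec t1 al2) (0\<^sub>m n2 n1) D ^\<^sub>m k) *\<^sub>v (0\<^sub>v n1 @\<^sub>v t2) = x @\<^sub>v ((D ^\<^sub>m k) *\<^sub>v t2)"
    and bx: "\<And>b. b \<in> carrier_vec n1 \<Longrightarrow> b \<bullet> x = (\<Sum>j<k. mcoef b A t1 (k - 1 - j) * mcoef al2 D t2 j)"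
    using block_pow_vec[OF A D t1 al2 t2, of k] by blast
  have "mcoef (a @\<^sub>v 0\<^sub>v n2) (four_block_mat A (outer_vec t1 al2) (0\<^sub>m n2 n1) D) (0\<^sub>v n1 @\<^sub>v t2) k
      = (a @\<^sub>v 0\<^sub>v n2) \<bullet> (x @\<^sub>v ((D ^\<^sub>m k) *\<^sub>v t2))"
    unfolding mcoef_def eq ..
  also have "\<dots> = a \<bullet> x + 0\<^sub>v n2 \<bullet> ((D ^\<^sub>m k) *\<^sub>v t2)"
    using a x D t2 by (intro scalar_prod_append[of _ n1 _ n2]) auto
  also have "\<dots> = (\<Sum>j<k. mcoef a A t1 (k - 1 - j) * mcoef al2 D t2 j)"
    using bx[OF a] D t2 by simp
  also have "\<dots> = (case k of 0 \<Rightarrow> 0 | Suc k \<Rightarrow> \<Sum>i\<le>k. mcoef a A t1 i * mcoef al2 D t2 (k - i))"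
  proof (cases k)
    case 0 then show ?thesis by simp
  next
    case (Suc m)
    have "(\<Sum>j<Suc m. mcoef a A t1 (Suc m - 1 - j) * mcoef al2 D t2 j) =
          (\<Sum>j<Suc m. (\<lambda>i. mcoef a A t1 i * mcoef al2 D t2 (m - i)) (Suc m - Suc j))"
      by (intro sum.cong refl) (auto simp: Suc_diff_le)
    also have "\<dots> = (\<Sum>i<Suc m. mcoef a A t1 i * mcoef al2 D t2 (m - i))"
      by (rule sum.nat_diff_reindex)
    finally show ?thesis using Suc by (simp add: lessThan_Suc_atMost)
  qed
  finally show ?thesis .
qed

lemma me_fun_alt:
  assumes a: "a \<in> carrier_vec n" and A: "A \<in> carrier_mat n n" and t: "t \<in> carrier_vec n"
  shows "me_fun a A t = (\<lambda>y. if 0 \<le> y then ser (mcoef a A t) y else 0)"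
  using me_fun_ser[OF a A t] by (auto simp: fun_eq_iff me_fun_def)

lemma me_fun_measurable:
  assumes a: "a \<in> carrier_vec n" and A: "A \<in> carrier_mat n n" and t: "t \<in> carrier_vec n"
  shows "me_fun a A t \<in> borel_measurable borel"
proof -
  have c: "ser (mcoef a A t) \<in> borel_measurable borel"
  proof (rule borel_measurable_continuous_onI)
    show "continuous_on UNIV (ser (mcoef a A t))"
      using ser_isCont[OF mcoef_gbound[OF a A t]] by (simp add: continuous_on_def isCont_def)
  qed
  show ?thesis unfolding me_fun_alt[OF a A t]
    by (rule measurable_If[OF c]) auto
qed

lemma me_fun_neg: "y < 0 \<Longrightarrow> me_fun a A t y = 0"
  unfolding me_fun_def by simp

lemma append_vec_zero0: "v @\<^sub>v 0\<^sub>v 0 = (v :: real vec)"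
  by (rule eq_vecI) (auto simp: index_append_vec)

lemma append_vec_vNil': "v @\<^sub>v vNil = (v :: real vec)"
  using append_vec_zero0[of v] by simp

definition Hf :: "(nat \<Rightarrow> real vec) \<Rightarrow> (nat \<Rightarrow> real mat) \<Rightarrow> (nat \<Rightarrow> real vec) \<Rightarrow> nat list \<Rightarrow> real \<Rightarrow> real" where
  "Hf al Tm tv is = me_fun (big_alpha al Tm is) (big_T al Tm tv is) (big_t tv Tm is)"

locale mesetup =
  fixes al :: "nat \<Rightarrow> real vec" and Tm :: "nat \<Rightarrow> real mat" and tv :: "nat \<Rightarrow> real vec"
    and n :: "nat \<Rightarrow> nat" and V :: "nat set"
  assumes dims: "\<And>j. j \<in> V \<Longrightarrow> al j \<in> carrier_vec (n j) \<and> Tm j \<in> carrier_mat (n j) (n j) \<and> tv j \<in> carrier_vec (n j)"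
    and ME: "\<And>j. j \<in> V \<Longrightarrow> me_density (me_fun (al j) (Tm j) (tv j))"
begin

abbreviation "g j \<equiv> me_fun (al j) (Tm j) (tv j)"
abbreviation "H \<equiv> Hf al Tm tv"

lemma g_nonneg: "j \<in> V \<Longrightarrow> 0 \<le> g j x"
proof -
  assume "j \<in> V"
  then have "me_density (g j)" by (rule ME)
  then show ?thesis unfolding me_density_def by blast
qed

lemma big_dims:
  "is \<noteq> [] \<Longrightarrow> set is \<subseteq> V \<Longrightarrow>
    big_alpha al Tm is \<in> carrier_vec (blk_dim Tm is) \<and>
    big_T al Tm tv is \<in> carrier_mat (blk_dim Tm is) (blk_dim Tm is) \<and>
    big_t tv Tm is \<in> carrier_vec (blk_dim Tm is)"
proof (induction "is" rule: induct_list012)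
  case 1
  then show ?case by simp
next
  case (2 j)
  then have "j \<in> V" by simp
  then show ?case using dims[of j] by (auto simp: blk_dim_def append_vec_zero0 append_vec_vNil')
next
  case (3 j k rest)
  have j: "j \<in> V" using 3(4) by simp
  have sub: "set (k # rest) \<subseteq> V" using 3(4) by simp
  have IH: "big_alpha al Tm (k # rest) \<in> carrier_vec (blk_dim Tm (k # rest)) \<and>
    big_T al Tm tv (k # rest) \<in> carrier_mat (blk_dim Tm (k # rest)) (blk_dim Tm (k # rest)) \<and>
    big_t tv Tm (k # rest) \<in> carrier_vec (blk_dim Tm (k # rest))"
    by (rule 3(2)[OF _ sub]) simp
  have Tj: "Tm j \<in> carrier_mat (n j) (n j)" using dims[OF j] by blast
  have dj: "dim_row (Tm j) = n j" using Tj by (rule carrier_matD)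
  have bd: "blk_dim Tm (j # k # rest) = n j + blk_dim Tm (k # rest)"
    using dj by (simp add: blk_dim_def)
  have T: "big_T al Tm tv (j # k # rest) \<in> carrier_mat (n j + blk_dim Tm (k # rest)) (n j + blk_dim Tm (k # rest))"
    unfolding big_T.simps dj using dims[OF j] IH by (intro four_block_carrier_mat) auto
  have a1: "big_alpha al Tm (j # k # rest) \<in> carrier_vec (n j + blk_dim Tm (k # rest))"
    unfolding big_alpha.simps using dims[OF j] by (intro append_carrier_vec) auto
  have t1: "big_t tv Tm (j # k # rest) \<in> carrier_vec (n j + blk_dim Tm (k # rest))"
    unfolding big_t.simps dj using IH by (intro append_carrier_vec) auto
  show ?case unfolding bd using T a1 t1 by blast
qed

lemma dims_j:
  assumes "j \<in> V"
  shows "al j \<in> carrier_vec (n j)" "Tm j \<in> carrier_mat (n j) (n j)" "tv j \<in> carrier_vec (n j)"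
  using dims[OF assms] by blast+

lemma H_single: "j \<in> V \<Longrightarrow> H [j] = g j"
  unfolding Hf_def by (simp add: blk_dim_def append_vec_zero0 append_vec_vNil')

lemma H_alt:
  assumes "is \<noteq> []" "set is \<subseteq> V"
  shows "H is = (\<lambda>y. if 0 \<le> y then ser (mcoef (big_alpha al Tm is) (big_T al Tm tv is) (big_t tv Tm is)) y else 0)"
  unfolding Hf_def using big_dims[OF assms] by (intro me_fun_alt) blast+

lemma H_measurable:
  assumes "is \<noteq> []" "set is \<subseteq> V"
  shows "H is \<in> borel_measurable borel"
  unfolding Hf_def using big_dims[OF assms] by (intro me_fun_measurable) blast+

lemma H_gbound:
  assumes "is \<noteq> []" "set is \<subseteq> V"
  shows "gbound (mcoef (big_alpha al Tm is) (big_T al Tm tv is) (big_t tv Tm is))"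
  using big_dims[OF assms] by (intro mcoef_gbound) blast+

lemma g_measurable: "j \<in> V \<Longrightarrow> g j \<in> borel_measurable borel"
  using dims_j by (intro me_fun_measurable) 

lemma H_conv:
  assumes j: "j \<in> V" and ne: "is \<noteq> []" and sub: "set is \<subseteq> V" and y: "0 \<le> y"
  shows "integrable lborel (\<lambda>s. g j (y - s) * H is s * indicator {0..y} s) \<and>
         H (j # is) y = (LINT s|lborel. g j (y - s) * H is s * indicator {0..y} s)"
proof -
  obtain k rest where isd: "is = k # rest" using ne by (cases "is") auto
  define N where "N = blk_dim Tm is"
  define al2 where "al2 = big_alpha al Tm is"
  define D where "D = big_T al Tm tv is"
  define t2 where "t2 = big_t tv Tm is"
  have dI: "al2 \<in> carrier_vec N" "D \<in> carrier_mat N N" "t2 \<in> carrier_vec N"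
    using big_dims[OF ne sub] unfolding N_def al2_def D_def t2_def by blast+
  have a: "al j \<in> carrier_vec (n j)" and A: "Tm j \<in> carrier_mat (n j) (n j)" and t1: "tv j \<in> carrier_vec (n j)"
    using dims_j[OF j] by blast+
  have dj: "dim_row (Tm j) = n j" using A by (rule carrier_matD)
  have ba: "big_alpha al Tm (j # is) = al j @\<^sub>v 0\<^sub>v N"
    unfolding isd N_def by simp
  have bT: "big_T al Tm tv (j # is) = four_block_mat (Tm j) (outer_vec (tv j) al2) (0\<^sub>m N (n j)) D"
    unfolding isd N_def al2_def D_def by (simp add: dj)
  have bt: "big_t tv Tm (j # is) = 0\<^sub>v (n j) @\<^sub>v t2"
    unfolding isd t2_def by (simp add: dj)
  have Tc: "four_block_mat (Tm j) (outer_vec (tv j) al2) (0\<^sub>m N (n j)) D \<in> carrier_mat (n j + N) (n j + N)"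
    using A dI by (intro four_block_carrier_mat) auto
  define u where "u = mcoef (al j) (Tm j) (tv j)"
  define v where "v = mcoef al2 D t2"
  have gu: "gbound u" unfolding u_def by (rule mcoef_gbound[OF a A t1])
  have gv: "gbound v" unfolding v_def by (rule mcoef_gbound[OF dI])
  have coef: "mcoef (al j @\<^sub>v 0\<^sub>v N) (four_block_mat (Tm j) (outer_vec (tv j) al2) (0\<^sub>m N (n j)) D) (0\<^sub>v (n j) @\<^sub>v t2)
     = (\<lambda>k. case k of 0 \<Rightarrow> 0 | Suc k \<Rightarrow> \<Sum>i\<le>k. u i * v (k - i))"
    unfolding u_def v_def by (rule ext, rule block_mcoef[OF A dI(2) t1 dI(1) dI(3) a])
  have "H (j # is) y = ser (mcoef (al j @\<^sub>v 0\<^sub>v N) (four_block_mat (Tm j) (outer_vec (tv j) al2) (0\<^sub>m N (n j)) D) (0\<^sub>v (n j) @\<^sub>v t2)) y"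
    unfolding Hf_def ba bT bt using a dI Tc t1 y by (intro me_fun_ser[of _ "n j + N"]) auto
  also have "\<dots> = ser (\<lambda>k. case k of 0 \<Rightarrow> 0 | Suc k \<Rightarrow> \<Sum>i\<le>k. u i * v (k - i)) y"
    unfolding coef ..
  finally have Hy: "H (j # is) y = ser (\<lambda>k. case k of 0 \<Rightarrow> 0 | Suc k \<Rightarrow> \<Sum>i\<le>k. u i * v (k - i)) y" .
  have SC: "integrable lborel (\<lambda>s. ser u (y - s) * ser v s * indicator {0..y} s) \<and>
    (LINT s|lborel. ser u (y - s) * ser v s * indicator {0..y} s) = ser (\<lambda>k. case k of 0 \<Rightarrow> 0 | Suc k \<Rightarrow> \<Sum>i\<le>k. u i * v (k - i)) y"
    by (rule ser_conv[OF gu gv y])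
  have pw: "g j (y - s) * H is s * indicator {0..y} s = ser u (y - s) * ser v s * indicator {0..y} s" for s
  proof (cases "s \<in> {0..y}")
    case True
    have "g j (y - s) = ser u (y - s)" unfolding u_def using True by (intro me_fun_ser[OF a A t1]) auto
    moreover have "H is s = ser v s" unfolding Hf_def v_def al2_def[symmetric] D_def[symmetric] t2_def[symmetric]
      using True by (intro me_fun_ser[OF dI]) auto
    ultimately show ?thesis by simp
  next
    case False then show ?thesis by simp
  qed
  have fe: "(\<lambda>s. g j (y - s) * H is s * indicator {0..y} s) = (\<lambda>s. ser u (y - s) * ser v s * indicator {0..y} s)"
    using pw by (rule ext)
  show ?thesis unfolding fe Hy using SC by simp
qed

end

context mesetup begin

lemma H_nonneg: "xs \<noteq> [] \<Longrightarrow> set xs \<subseteq> V \<Longrightarrow> 0 \<le> H xs y"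
proof (induction xs arbitrary: y)
  case Nil
  then show ?case by simp
next
  case (Cons j xs)
  have j: "j \<in> V" using Cons.prems by simp
  show ?case
  proof (cases "xs = []")
    case True
    then show ?thesis using H_single[OF j] g_nonneg[OF j] by simp
  next
    case False
    have sub: "set xs \<subseteq> V" using Cons.prems by simp
    show ?thesis
    proof (cases "0 \<le> y")
      case True
      have "H (j # xs) y = (LINT s|lborel. g j (y - s) * H xs s * indicator {0..y} s)"
        using H_conv[OF j False sub True] by blast
      also have "0 \<le> \<dots>"
        by (rule Bochner_Integration.integral_nonneg)
           (use g_nonneg[OF j] Cons.IH[OF False sub] in auto)
      finally show ?thesis .
    next
      case False
      then show ?thesis unfolding Hf_def by (simp add: me_fun_neg)
    qed
  qed
qed

lemma H_nn_conv:
  assumes j: "j \<in> V" and ne: "xs \<noteq> []" and sub: "set xs \<subseteq> V"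
  shows "ennreal (H (j # xs) y) = (\<integral>\<^sup>+ s. ennreal (g j (y - s)) * ennreal (H xs s) \<partial>lborel)"
proof (cases "0 \<le> y")
  case False
  have "(\<lambda>s. ennreal (g j (y - s)) * ennreal (H xs s)) = (\<lambda>s. 0)"
  proof (rule ext)
    fix s
    show "ennreal (g j (y - s)) * ennreal (H xs s) = 0"
    proof (cases "s < 0")
      case True
      then show ?thesis unfolding Hf_def by (simp add: me_fun_neg)
    next
      case False
      then have "y - s < 0" using \<open>\<not> 0 \<le> y\<close> by simp
      then show ?thesis by (simp add: me_fun_neg)
    qed
  qed
  then have "(\<integral>\<^sup>+ s. ennreal (g j (y - s)) * ennreal (H xs s) \<partial>lborel) = 0" by simp
  moreover have "H (j # xs) y = 0" using False unfolding Hf_def by (simp add: me_fun_neg)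
  ultimately show ?thesis by simp
next
  case True
  have C: "integrable lborel (\<lambda>s. g j (y - s) * H xs s * indicator {0..y} s) \<and>
         H (j # xs) y = (LINT s|lborel. g j (y - s) * H xs s * indicator {0..y} s)"
    by (rule H_conv[OF j ne sub True])
  have "(\<integral>\<^sup>+ s. ennreal (g j (y - s)) * ennreal (H xs s) \<partial>lborel) =
        (\<integral>\<^sup>+ s. ennreal (g j (y - s) * H xs s * indicator {0..y} s) \<partial>lborel)"
  proof (rule nn_integral_cong)
    fix s
    show "ennreal (g j (y - s)) * ennreal (H xs s) = ennreal (g j (y - s) * H xs s * indicator {0..y} s)"
    proof (cases "s \<in> {0..y}")
      case True
      then show ?thesis using g_nonneg[OF j] H_nonneg[OF ne sub] by (simp add: ennreal_mult)
    next
      case False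
      then have "s < 0 \<or> y - s < 0" by auto
      then have "g j (y - s) = 0 \<or> H xs s = 0" unfolding Hf_def by (auto simp: me_fun_neg)
      then show ?thesis using False by auto
    qed
  qed
  also have "\<dots> = ennreal (LINT s|lborel. g j (y - s) * H xs s * indicator {0..y} s)"
    using C g_nonneg[OF j] H_nonneg[OF ne sub] by (intro nn_integral_eq_integral) auto
  also have "\<dots> = ennreal (H (j # xs) y)" using C by simp
  finally show ?thesis by simp
qed

lemma sum_distributed:
  assumes P: "prob_space P" and indep: "prob_space.indep_vars P (\<lambda>_. borel) X I"
    and ne: "xs \<noteq> []" and sub: "set xs \<subseteq> V" and IS: "{m..<m + length xs} \<subseteq> I"
    and dist: "\<And>k. k < length xs \<Longrightarrow> distributed P lborel (X (m + k)) (\<lambda>x. ennreal (g (xs ! k) x))"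
  shows "distributed P lborel (\<lambda>\<omega>. \<Sum>i\<in>{m..<m + length xs}. X i \<omega>) (\<lambda>y. ennreal (H xs y))"
  using ne sub IS dist
proof (induction xs arbitrary: m)
  case Nil
  then show ?case by simp
next
  case (Cons j xs)
  have j: "j \<in> V" using Cons.prems by simp
  show ?case
  proof (cases "xs = []")
    case True
    have "distributed P lborel (X (m + 0)) (\<lambda>x. ennreal (g ((j # xs) ! 0) x))"
      by (rule Cons.prems(4)) simp
    then show ?thesis using True H_single[OF j] by simp
  next
    case False
    have sub': "set xs \<subseteq> V" using Cons.prems by simp
    have IS': "{Suc m..<Suc m + length xs} \<subseteq> I" using Cons.prems(3) by auto
    have dist': "distributed P lborel (X (Suc m + k)) (\<lambda>x. ennreal (g (xs ! k) x))" if "k < length xs" for k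
      using Cons.prems(4)[of "Suc k"] that by simp
    have D2: "distributed P lborel (\<lambda>\<omega>. \<Sum>i\<in>{Suc m..<Suc m + length xs}. X i \<omega>) (\<lambda>y. ennreal (H xs y))"
      by (rule Cons.IH[OF False sub' IS' dist'])
    have D1: "distributed P lborel (X m) (\<lambda>x. ennreal (g j x))"
      using Cons.prems(4)[of 0] by simp
    have ind2: "prob_space.indep_vars P (\<lambda>_. borel) X (insert m {Suc m..<Suc m + length xs})"
      using Cons.prems(3) by (intro prob_space.indep_vars_subset[OF P indep]) auto
    have iv: "prob_space.indep_var P borel (X m) borel (\<lambda>\<omega>. \<Sum>i\<in>{Suc m..<Suc m + length xs}. X i \<omega>)"
      by (rule prob_space.indep_vars_sum[OF P _ _ ind2]) auto
    have "distributed P lborel (\<lambda>\<omega>. X m \<omega> + (\<Sum>i\<in>{Suc m..<Suc m + length xs}. X i \<omega>))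
            (\<lambda>y. \<integral>\<^sup>+ s. ennreal (g j (y - s)) * ennreal (H xs s) \<partial>lborel)"
      by (rule prob_space.distributed_convolution[OF P iv D1 D2])
    also have "(\<lambda>y. \<integral>\<^sup>+ s. ennreal (g j (y - s)) * ennreal (H xs s) \<partial>lborel) = (\<lambda>y. ennreal (H (j # xs) y))"
      using H_nn_conv[OF j False sub'] by (simp add: fun_eq_iff)
    also have "(\<lambda>\<omega>. X m \<omega> + (\<Sum>i\<in>{Suc m..<Suc m + length xs}. X i \<omega>)) = (\<lambda>\<omega>. \<Sum>i\<in>{m..<m + length (j # xs)}. X i \<omega>)"
    proof (rule ext)
      fix \<omega>
      have "{m..<m + length (j # xs)} = insert m {Suc m..<Suc m + length xs}" by auto
      then show "X m \<omega> + (\<Sum>i\<in>{Suc m..<Suc m + length xs}. X i \<omega>) = (\<Sum>i\<in>{m..<m + length (j # xs)}. X i \<omega>)"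
        by simp
    qed
    finally show ?thesis .
  qed
qed

end

definition idx :: "nat list \<Rightarrow> nat \<Rightarrow> nat" where
  "idx xs k = (if k < length xs then xs ! k else hd xs)"

lemma psf_lborel: "product_sigma_finite (\<lambda>_. lborel)"
  unfolding product_sigma_finite_def using sigma_finite_lborel by blast

context mesetup begin

definition fam :: "nat list \<Rightarrow> nat \<Rightarrow> real measure" where
  "fam xs k = density lborel (\<lambda>x. ennreal (g (idx xs k) x))"

definition Q :: "nat list \<Rightarrow> (nat \<Rightarrow> real) measure" where
  "Q xs = PiM {0..<length xs} (fam xs)"

lemma g_meas_enn: "j \<in> V \<Longrightarrow> (\<lambda>x. ennreal (g j x)) \<in> borel_measurable borel"
  using g_measurable by (rule measurable_compose[OF _ measurable_ennreal])

lemma g_int1: assumes j: "j \<in> V" shows "(\<integral>\<^sup>+x. ennreal (g j x) \<partial>lborel) = 1"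
proof -
  have hi: "(g j has_integral 1) {0..}" using ME[OF j] unfolding me_density_def by blast
  have "(\<integral>\<^sup>+x. ennreal (indicator {0..} x * g j x) \<partial>lborel) = ennreal 1"
    by (rule nn_integral_has_integral_lebesgue[OF _ hi]) (rule g_nonneg[OF j])
  moreover have "indicator {0..} x * g j x = g j x" for x :: real
    by (cases "0 \<le> x") (auto simp: me_fun_neg)
  ultimately show ?thesis by simp
qed

lemma g_prob: assumes j: "j \<in> V" shows "prob_space (density lborel (\<lambda>x. ennreal (g j x)))"
proof (rule prob_spaceI)
  have "emeasure (density lborel (\<lambda>x. ennreal (g j x))) UNIV = (\<integral>\<^sup>+x. ennreal (g j x) * indicator UNIV x \<partial>lborel)"
    using g_meas_enn[OF j] by (subst emeasure_density) auto
  also have "\<dots> = 1" using g_int1[OF j] by simp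
  finally show "emeasure (density lborel (\<lambda>x. ennreal (g j x))) (space (density lborel (\<lambda>x. ennreal (g j x)))) = 1"
    by simp
qed

lemma idx_in: "xs \<noteq> [] \<Longrightarrow> set xs \<subseteq> V \<Longrightarrow> idx xs k \<in> V"
  unfolding idx_def using nth_mem[of k xs] hd_in_set[of xs] by auto

lemma fam_prob: "xs \<noteq> [] \<Longrightarrow> set xs \<subseteq> V \<Longrightarrow> prob_space (fam xs k)"
  unfolding fam_def by (rule g_prob[OF idx_in])

lemma sets_fam[simp]: "sets (fam xs k) = sets borel"
  unfolding fam_def by simp

lemma space_fam[simp]: "space (fam xs k) = UNIV"
  unfolding fam_def by simp

lemma Q_prob: "xs \<noteq> [] \<Longrightarrow> set xs \<subseteq> V \<Longrightarrow> prob_space (Q xs)"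
  unfolding Q_def by (intro prob_space_PiM fam_prob)

lemma comp_meas: "k \<in> {0..<length xs} \<Longrightarrow> (\<lambda>x. x k) \<in> measurable (Q xs) borel"
  unfolding Q_def by (rule measurable_PiM_component_rev[where f="\<lambda>x. x"]) (auto intro: measurable_ident_sets)

lemma comp_distr:
  assumes ne: "xs \<noteq> []" and sub: "set xs \<subseteq> V" and k: "k \<in> {0..<length xs}"
  shows "distr (Q xs) borel (\<lambda>x. x k) = fam xs k"
proof -
  have "distr (Q xs) borel (\<lambda>x. x k) = distr (Q xs) (fam xs k) (\<lambda>x. x k)"
    by (rule distr_cong) auto
  also have "\<dots> = fam xs k"
    unfolding Q_def by (rule distr_PiM_component[OF fam_prob[OF ne sub] k])
  finally show ?thesis .
qed

lemma Q_indep: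
  assumes ne: "xs \<noteq> []" and sub: "set xs \<subseteq> V"
  shows "prob_space.indep_vars (Q xs) (\<lambda>_. borel) (\<lambda>k x. x k) {0..<length xs}"
proof -
  interpret P: prob_space "Q xs" by (rule Q_prob[OF ne sub])
  have I: "{0..<length xs} \<noteq> {}" using ne by simp
  show ?thesis
  proof (subst P.indep_vars_iff_distr_eq_PiM'[OF I])
    show "(\<lambda>x. x i) \<in> measurable (Q xs) borel" if "i \<in> {0..<length xs}" for i
      using comp_meas[of i xs] that by simp
    have "distr (Q xs) (Pi\<^sub>M {0..<length xs} (\<lambda>_. borel)) (\<lambda>x. \<lambda>i\<in>{0..<length xs}. x i)
        = distr (Q xs) (Q xs) (\<lambda>x. x)"
    proof (rule distr_cong)
      show "sets (Pi\<^sub>M {0..<length xs} (\<lambda>_. borel)) = sets (Q xs)"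
        unfolding Q_def by (rule sets_PiM_cong) auto
      fix x assume "x \<in> space (Q xs)"
      then show "(\<lambda>i\<in>{0..<length xs}. x i) = x"
        unfolding Q_def space_PiM by (auto simp: PiE_def extensional_def fun_eq_iff)
    qed simp
    also have "\<dots> = Q xs" by (rule distr_id2) simp
    also have "\<dots> = Pi\<^sub>M {0..<length xs} (\<lambda>i. distr (Q xs) borel (\<lambda>x. x i))"
      unfolding Q_def by (rule PiM_cong) (auto simp: comp_distr[OF ne sub, unfolded Q_def])
    finally show "distr (Q xs) (Pi\<^sub>M {0..<length xs} (\<lambda>_. borel)) (\<lambda>x. \<lambda>i\<in>{0..<length xs}. x i) =
        Pi\<^sub>M {0..<length xs} (\<lambda>i. distr (Q xs) borel (\<lambda>x. x i))" .
  qed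
qed

lemma Q_comp_dist:
  assumes ne: "xs \<noteq> []" and sub: "set xs \<subseteq> V" and k: "k < length xs"
  shows "distributed (Q xs) lborel (\<lambda>x. x k) (\<lambda>x. ennreal (g (xs ! k) x))"
  unfolding distributed_def
proof (intro conjI)
  have "xs ! k \<in> V" using sub k by auto
  then show "(\<lambda>x. ennreal (g (xs ! k) x)) \<in> borel_measurable lborel"
    using g_meas_enn by simp
  show "(\<lambda>x. x k) \<in> Q xs \<rightarrow>\<^sub>M lborel" using comp_meas[of k xs] k by simp
  have "distr (Q xs) lborel (\<lambda>x. x k) = distr (Q xs) borel (\<lambda>x. x k)"
    by (rule distr_cong) auto
  also have "\<dots> = fam xs k" using comp_distr[OF ne sub] k by simp
  also have "\<dots> = density lborel (\<lambda>x. ennreal (g (xs ! k) x))"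
    unfolding fam_def idx_def using k by simp
  finally show "distr (Q xs) lborel (\<lambda>x. x k) = density lborel (\<lambda>x. ennreal (g (xs ! k) x))" .
qed

lemma Q_sum_dist:
  assumes ne: "xs \<noteq> []" and sub: "set xs \<subseteq> V"
  shows "distributed (Q xs) lborel (\<lambda>x. \<Sum>i\<in>{0..<length xs}. x i) (\<lambda>y. ennreal (H xs y))"
  using sum_distributed[OF Q_prob[OF ne sub] Q_indep[OF ne sub] ne sub, of 0] Q_comp_dist[OF ne sub]
  by simp

lemma indicator_PiE_prod:
  fixes x :: "nat \<Rightarrow> real"
  assumes x: "x \<in> extensional I" and fin: "finite I"
  shows "(indicator (Pi\<^sub>E I A) x :: ennreal) = (\<Prod>k\<in>I. indicator (A k) (x k))"
proof (cases "\<forall>k\<in>I. x k \<in> A k")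
  case True
  then have "x \<in> Pi\<^sub>E I A" using x by (auto simp: PiE_def)
  then show ?thesis using True by simp
next
  case False
  then obtain k where k: "k \<in> I" "x k \<notin> A k" by blast
  then have "x \<notin> Pi\<^sub>E I A" by auto
  moreover have "(\<Prod>k\<in>I. (indicator (A k) (x k) :: ennreal)) = 0"
    using fin by (rule prod_zero) (use k in \<open>auto intro!: bexI[of _ k]\<close>)
  ultimately show ?thesis by simp
qed

lemma F_meas:
  assumes "set xs \<subseteq> V"
  shows "(\<lambda>x. \<Prod>k\<in>{0..<length xs}. ennreal (g (xs ! k) (x k))) \<in> borel_measurable (PiM {0..<length xs} (\<lambda>_. lborel))"
proof (rule borel_measurable_prod_ennreal)
  fix k assume k: "k \<in> {0..<length xs}"
  then have "xs ! k \<in> V" using assms by auto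
  then have "(\<lambda>y. ennreal (g (xs ! k) y)) \<in> borel_measurable lborel" using g_meas_enn by simp
  then show "(\<lambda>x. ennreal (g (xs ! k) (x k))) \<in> borel_measurable (PiM {0..<length xs} (\<lambda>_. lborel))"
    by (rule measurable_PiM_component_rev[OF k])
qed

lemma Q_density:
  assumes ne: "xs \<noteq> []" and sub: "set xs \<subseteq> V"
  shows "density (PiM {0..<length xs} (\<lambda>_. lborel)) (\<lambda>x. \<Prod>k\<in>{0..<length xs}. ennreal (g (xs ! k) (x k))) = Q xs"
proof -
  define I where "I = {0..<length xs}"
  have psf: "product_sigma_finite (fam xs)"
    unfolding product_sigma_finite_def using fam_prob[OF ne sub] prob_space_imp_sigma_finite by blast
  have FM: "(\<lambda>x. \<Prod>k\<in>I. ennreal (g (xs ! k) (x k))) \<in> borel_measurable (PiM I (\<lambda>_. lborel))"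
    unfolding I_def by (rule F_meas[OF sub])
  show ?thesis unfolding Q_def I_def[symmetric]
  proof (rule product_sigma_finite.PiM_eqI[OF psf])
    show "finite I" unfolding I_def by simp
    show "sets (density (PiM I (\<lambda>_. lborel)) (\<lambda>x. \<Prod>k\<in>I. ennreal (g (xs ! k) (x k)))) = sets (PiM I (fam xs))"
      unfolding sets_density by (rule sets_PiM_cong) auto
    fix A assume A: "\<And>i. i \<in> I \<Longrightarrow> A i \<in> sets (fam xs i)"
    have Ab: "A i \<in> sets lborel" if "i \<in> I" for i using A[OF that] by simp
    have PE: "Pi\<^sub>E I A \<in> sets (PiM I (\<lambda>_. lborel))"
      using Ab by (intro sets_PiM_I_finite) (auto simp: I_def)
    have "emeasure (density (PiM I (\<lambda>_. lborel)) (\<lambda>x. \<Prod>k\<in>I. ennreal (g (xs ! k) (x k)))) (Pi\<^sub>E I A)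
       = (\<integral>\<^sup>+ x. (\<Prod>k\<in>I. ennreal (g (xs ! k) (x k))) * indicator (Pi\<^sub>E I A) x \<partial>PiM I (\<lambda>_. lborel))"
      by (rule emeasure_density[OF FM PE])
    also have "\<dots> = (\<integral>\<^sup>+ x. (\<Prod>k\<in>I. ennreal (g (xs ! k) (x k)) * indicator (A k) (x k)) \<partial>PiM I (\<lambda>_. lborel))"
    proof (rule nn_integral_cong)
      fix x assume "x \<in> space (PiM I (\<lambda>_. lborel :: real measure))"
      then have "x \<in> extensional I" unfolding space_PiM by (auto simp: PiE_def)
      then show "(\<Prod>k\<in>I. ennreal (g (xs ! k) (x k))) * indicator (Pi\<^sub>E I A) x =
          (\<Prod>k\<in>I. ennreal (g (xs ! k) (x k)) * indicator (A k) (x k))"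
        by (simp add: indicator_PiE_prod I_def prod.distrib)
    qed
    also have "\<dots> = (\<Prod>k\<in>I. \<integral>\<^sup>+ y. ennreal (g (xs ! k) y) * indicator (A k) y \<partial>lborel)"
    proof (rule product_sigma_finite.product_nn_integral_prod[OF psf_lborel, where f="\<lambda>k y. ennreal (g (xs ! k) y) * indicator (A k) y"])
      show "finite I" unfolding I_def by simp
      fix k assume k: "k \<in> I"
      then have "xs ! k \<in> V" using sub by (auto simp: I_def)
      then show "(\<lambda>y. ennreal (g (xs ! k) y) * indicator (A k) y) \<in> borel_measurable lborel"
        using g_meas_enn Ab[OF k] by measurable
    qed
    also have "\<dots> = (\<Prod>k\<in>I. emeasure (fam xs k) (A k))"
    proof (rule prod.cong[OF refl])
      fix k assume k: "k \<in> I"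
      then have "xs ! k \<in> V" using sub by (auto simp: I_def)
      have "emeasure (fam xs k) (A k) = (\<integral>\<^sup>+ y. ennreal (g (xs ! k) y) * indicator (A k) y \<partial>lborel)"
        unfolding fam_def idx_def using k \<open>xs ! k \<in> V\<close> g_meas_enn Ab[OF k]
        by (subst emeasure_density) (auto simp: I_def)
      then show "(\<integral>\<^sup>+ y. ennreal (g (xs ! k) y) * indicator (A k) y \<partial>lborel) = emeasure (fam xs k) (A k)" by simp
    qed
    finally show "emeasure (density (PiM I (\<lambda>_. lborel)) (\<lambda>x. \<Prod>k\<in>I. ennreal (g (xs ! k) (x k)))) (Pi\<^sub>E I A)
       = (\<Prod>k\<in>I. emeasure (fam xs k) (A k))" .
  qed
qed

end

lemma nn_real_helper:
  fixes f :: "'a \<Rightarrow> real"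
  assumes f: "f \<in> borel_measurable M" and nn: "\<And>x. 0 \<le> f x" and B: "B \<in> sets M"
    and fin: "(\<integral>\<^sup>+ x. ennreal (f x) * indicator B x \<partial>M) < \<infinity>"
  shows "integrable M (\<lambda>x. indicator B x * f x) \<and>
    ennreal (\<integral> x. indicator B x * f x \<partial>M) = (\<integral>\<^sup>+ x. ennreal (f x) * indicator B x \<partial>M)"
proof -
  have eq: "(\<lambda>x. ennreal (indicator B x * f x)) = (\<lambda>x. ennreal (f x) * indicator B x)"
    by (auto simp: fun_eq_iff split: split_indicator)
  have m: "(\<lambda>x. indicator B x * f x) \<in> borel_measurable M"
    using f B by measurable
  have i: "integrable M (\<lambda>x. indicator B x * f x)"
    by (rule integrableI_nonneg[OF m]) (use nn fin eq in auto)
  have "(\<integral>\<^sup>+ x. ennreal (indicator B x * f x) \<partial>M) = ennreal (\<integral> x. indicator B x * f x \<partial>M)"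
    by (rule nn_integral_eq_integral[OF i]) (use nn in auto)
  with i eq show ?thesis by simp
qed

context mesetup begin

lemma Fprod_meas:
  assumes "set xs \<subseteq> V"
  shows "(\<lambda>x. \<Prod>k\<in>{0..<length xs}. g (xs ! k) (x k)) \<in> borel_measurable (PiM {0..<length xs} (\<lambda>_. lborel))"
proof (rule borel_measurable_prod)
  fix k assume k: "k \<in> {0..<length xs}"
  then have "xs ! k \<in> V" using assms by auto
  then have "g (xs ! k) \<in> borel_measurable lborel" using g_measurable by simp
  then show "(\<lambda>x. g (xs ! k) (x k)) \<in> borel_measurable (PiM {0..<length xs} (\<lambda>_. lborel))"
    by (rule measurable_PiM_component_rev[OF k])
qed

lemma sum_meas: "(\<lambda>x. \<Sum>j\<in>I. x j) \<in> borel_measurable (PiM I (\<lambda>_. lborel :: real measure))"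
proof (rule borel_measurable_sum)
  fix j assume "j \<in> I"
  then show "(\<lambda>x. x j) \<in> borel_measurable (PiM I (\<lambda>_. lborel :: real measure))"
    by (rule measurable_PiM_component_rev) simp
qed

lemma K1:
  assumes ne: "xs \<noteq> []" and sub: "set xs \<subseteq> V" and A: "A \<in> sets borel"
  defines "I \<equiv> {0..<length xs}"
  defines "B \<equiv> (\<lambda>x. \<Sum>j\<in>I. x j) -` A \<inter> space (PiM I (\<lambda>_. lborel))"
  shows "integrable (PiM I (\<lambda>_. lborel)) (\<lambda>x. indicator B x * (\<Prod>k\<in>I. g (xs ! k) (x k))) \<and>
    integrable lborel (\<lambda>y. indicator A y * H xs y) \<and>
    (\<integral> x. indicator B x * (\<Prod>k\<in>I. g (xs ! k) (x k)) \<partial>PiM I (\<lambda>_. lborel)) = (\<integral> y. indicator A y * H xs y \<partial>lborel)"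
proof -
  define PL where "PL = PiM I (\<lambda>_. lborel :: real measure)"
  define F where "F x = (\<Prod>k\<in>I. g (xs ! k) (x k))" for x
  have Fnn: "0 \<le> F x" for x unfolding F_def
    using sub by (intro prod_nonneg g_nonneg) (auto simp: I_def)
  have FM: "F \<in> borel_measurable PL" unfolding F_def PL_def I_def by (rule Fprod_meas[OF sub])
  have QP: "prob_space (Q xs)" by (rule Q_prob[OF ne sub])
  have Qd: "Q xs = density PL (\<lambda>x. ennreal (F x))"
  proof -
    have "(\<lambda>x. \<Prod>k\<in>I. ennreal (g (xs ! k) (x k))) = (\<lambda>x. ennreal (F x))"
      unfolding F_def using sub by (intro ext prod_ennreal) (auto intro!: g_nonneg simp: I_def)
    then show ?thesis using Q_density[OF ne sub] unfolding PL_def I_def by simp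
  qed
  have SD: "distributed (Q xs) lborel (\<lambda>x. \<Sum>j\<in>I. x j) (\<lambda>y. ennreal (H xs y))"
    unfolding I_def by (rule Q_sum_dist[OF ne sub])
  have sm: "(\<lambda>x. \<Sum>j\<in>I. x j) \<in> measurable (Q xs) lborel"
    using distributed_measurable[OF SD] .
  have spQ: "space (Q xs) = space PL" unfolding Qd by simp
  have BS: "B \<in> sets PL" unfolding B_def PL_def using sum_meas[of I] A by measurable
  have e1: "emeasure (Q xs) B = (\<integral>\<^sup>+ x. ennreal (F x) * indicator B x \<partial>PL)"
    unfolding Qd by (rule emeasure_density[OF _ BS]) (use FM in measurable)
  have "emeasure (Q xs) B = emeasure (distr (Q xs) lborel (\<lambda>x. \<Sum>j\<in>I. x j)) A"
    using sm A spQ unfolding B_def PL_def by (subst emeasure_distr) auto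
  also have "\<dots> = emeasure (density lborel (\<lambda>y. ennreal (H xs y))) A"
    using distributed_distr_eq_density[OF SD] by simp
  also have "\<dots> = (\<integral>\<^sup>+ y. ennreal (H xs y) * indicator A y \<partial>lborel)"
    using H_measurable[OF ne sub] A by (subst emeasure_density) auto
  finally have e2: "emeasure (Q xs) B = (\<integral>\<^sup>+ y. ennreal (H xs y) * indicator A y \<partial>lborel)" .
  have fin: "emeasure (Q xs) B < \<infinity>"
    using prob_space.emeasure_le_1[OF QP, of B] by (simp add: order_le_less_trans)
  have R1: "integrable PL (\<lambda>x. indicator B x * F x) \<and>
    ennreal (\<integral> x. indicator B x * F x \<partial>PL) = (\<integral>\<^sup>+ x. ennreal (F x) * indicator B x \<partial>PL)"
    by (rule nn_real_helper[OF FM Fnn BS]) (use e1 fin in simp)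
  have R2: "integrable lborel (\<lambda>y. indicator A y * H xs y) \<and>
    ennreal (\<integral> y. indicator A y * H xs y \<partial>lborel) = (\<integral>\<^sup>+ y. ennreal (H xs y) * indicator A y \<partial>lborel)"
    by (rule nn_real_helper[OF _ H_nonneg[OF ne sub]]) (use e2 fin H_measurable[OF ne sub] A in auto)
  have "ennreal (\<integral> x. indicator B x * F x \<partial>PL) = ennreal (\<integral> y. indicator A y * H xs y \<partial>lborel)"
    using R1 R2 e1 e2 by simp
  moreover have "0 \<le> (\<integral> x. indicator B x * F x \<partial>PL)" using Fnn by simp
  moreover have "0 \<le> (\<integral> y. indicator A y * H xs y \<partial>lborel)" using H_nonneg[OF ne sub] by simp
  ultimately have "(\<integral> x. indicator B x * F x \<partial>PL) = (\<integral> y. indicator A y * H xs y \<partial>lborel)"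
    by simp
  with R1 R2 show ?thesis unfolding PL_def F_def by simp
qed

lemma H_me_density:
  assumes ne: "xs \<noteq> []" and sub: "set xs \<subseteq> V"
  shows "me_density (H xs)"
proof -
  have SD: "distributed (Q xs) lborel (\<lambda>x. \<Sum>j\<in>{0..<length xs}. x j) (\<lambda>y. ennreal (H xs y))"
    by (rule Q_sum_dist[OF ne sub])
  have "prob_space (distr (Q xs) lborel (\<lambda>x. \<Sum>j\<in>{0..<length xs}. x j))"
    by (rule prob_space.prob_space_distr[OF Q_prob[OF ne sub] distributed_measurable[OF SD]])
  then have "prob_space (density lborel (\<lambda>y. ennreal (H xs y)))"
    using distributed_distr_eq_density[OF SD] by simp
  then have "emeasure (density lborel (\<lambda>y. ennreal (H xs y))) UNIV = 1"
    using prob_space.emeasure_space_1 by fastforce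
  then have i1: "(\<integral>\<^sup>+ y. ennreal (H xs y) \<partial>lborel) = ennreal 1"
    using H_measurable[OF ne sub] by (subst (asm) emeasure_density) auto
  have hU: "(H xs has_integral 1) UNIV"
    by (rule nn_integral_has_integral[OF H_measurable[OF ne sub] H_nonneg[OF ne sub] i1]) simp
  have "(\<lambda>x. if x \<in> {0..} then H xs x else 0) = H xs"
    by (auto simp: fun_eq_iff Hf_def me_fun_neg)
  then have h0: "(H xs has_integral 1) {0..}"
    using hU has_integral_restrict_UNIV[of "{0..}" "H xs" 1] by simp
  show ?thesis unfolding me_density_def
    apply (rule exI[of _ "blk_dim Tm xs"], rule exI[of _ "big_alpha al Tm xs"],
           rule exI[of _ "big_T al Tm tv xs"], rule exI[of _ "big_t tv Tm xs"])
    using big_dims[OF ne sub] H_nonneg[OF ne sub] h0 by (simp add: Hf_def)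
qed

end

theorem theorem10:
  fixes L M :: nat
    and al :: "nat \<Rightarrow> real vec" and Tm :: "nat \<Rightarrow> real mat" and tv :: "nat \<Rightarrow> real vec"
    and n :: "nat \<Rightarrow> nat"
    and p :: "nat list \<Rightarrow> real"
    and Pr :: "'a measure" and X :: "'a \<Rightarrow> nat \<Rightarrow> real"
    and f :: "(nat \<Rightarrow> real) \<Rightarrow> real"
  assumes "L \<ge> 1" and "M \<ge> 1"
    and dims: "\<And>j. j \<in> {1..L} \<Longrightarrow>
                 al j \<in> carrier_vec (n j) \<and> Tm j \<in> carrier_mat (n j) (n j) \<and> tv j \<in> carrier_vec (n j)"
    and ME: "\<And>j. j \<in> {1..L} \<Longrightarrow> me_density (me_fun (al j) (Tm j) (tv j))"
    and psum: "(\<Sum>is\<in>{is. length is = M \<and> set is \<subseteq> {1..L}}. p is) = 1"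
    and f_def: "\<And>x. f x = (\<Sum>is\<in>{is. length is = M \<and> set is \<subseteq> {1..L}}.
                   p is * (\<Prod>k<M. me_fun (al (is ! k)) (Tm (is ! k)) (tv (is ! k)) (x k)))"
    and f_nonneg: "\<And>x. (\<forall>k<M. 0 \<le> x k) \<Longrightarrow> 0 \<le> f x"
    and "prob_space Pr"
    and dist: "distributed Pr (PiM {0..<M} (\<lambda>_. lborel)) X (\<lambda>x. ennreal (f x))"
  shows "MEam (\<lambda>y. \<Sum>is\<in>{is. length is = M \<and> set is \<subseteq> {1..L}}.
                   p is * me_fun (big_alpha al Tm is) (big_T al Tm tv is) (big_t tv Tm is) y)
       \<and> distributed Pr lborel (\<lambda>\<omega>. \<Sum>j<M. X \<omega> j)
           (\<lambda>y. ennreal (\<Sum>is\<in>{is. length is = M \<and> set is \<subseteq> {1..L}}.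
                   p is * me_fun (big_alpha al Tm is) (big_T al Tm tv is) (big_t tv Tm is) y))"
proof -
  interpret mesetup al Tm tv n "{1..L}"
    by unfold_locales (use dims ME in blast)+
  define S where "S = {is. length is = M \<and> set is \<subseteq> {1..L}}"
  have finS: "finite S"
  proof -
    have "finite {xs. set xs \<subseteq> {1..L} \<and> length xs = M}" by (rule finite_lists_length_eq) simp
    moreover have "S = {xs. set xs \<subseteq> {1..L} \<and> length xs = M}" unfolding S_def by auto
    ultimately show ?thesis by simp
  qed
  have Sp: "xs \<noteq> [] \<and> set xs \<subseteq> {1..L} \<and> length xs = M" if "xs \<in> S" for xs
    using that \<open>M \<ge> 1\<close> unfolding S_def by auto
  define htot where "htot y = (\<Sum>is\<in>S. p is * H is y)" for y
  have htot_eq: "(\<lambda>y. \<Sum>is\<in>{is. length is = M \<and> set is \<subseteq> {1..L}}.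
                   p is * me_fun (big_alpha al Tm is) (big_T al Tm tv is) (big_t tv Tm is) y) = htot"
    unfolding htot_def S_def Hf_def ..
  define I where "I = {0..<M}"
  define PL where "PL = PiM I (\<lambda>_. lborel :: real measure)"
  define sumf where "sumf x = (\<Sum>j\<in>I. x j)" for x :: "nat \<Rightarrow> real"
  define F where "F is x = (\<Prod>k\<in>I. g (is ! k) (x k))" for "is" x
  have f_eq: "f x = (\<Sum>is\<in>S. p is * F is x)" for x
    unfolding f_def S_def F_def I_def by (simp add: lessThan_atLeast0)
  have f_nn: "0 \<le> f x" for x
  proof (cases "\<forall>k<M. 0 \<le> x k")
    case True then show ?thesis by (rule f_nonneg)
  next
    case False
    then obtain k where k: "k < M" "x k < 0" by auto
    have "F is x = 0" for "is"
      unfolding F_def using k by (intro prod_zero) (auto simp: I_def me_fun_neg intro!: bexI[of _ k])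
    then show ?thesis unfolding f_eq by simp
  qed
  have Hmeas: "H is \<in> borel_measurable borel" if "is \<in> S" for "is"
    using Sp[OF that] H_measurable by blast
  have htot_meas: "htot \<in> borel_measurable borel"
    unfolding htot_def using Hmeas by (intro borel_measurable_sum borel_measurable_times) auto
  have KEY: "integrable lborel (\<lambda>y. indicator A y * htot y) \<and>
      (\<integral> x. indicator (sumf -` A \<inter> space PL) x * f x \<partial>PL) = (\<integral> y. indicator A y * htot y \<partial>lborel)"
    if A: "A \<in> sets borel" for A
  proof -
    define B where "B = sumf -` A \<inter> space PL"
    have K: "integrable PL (\<lambda>x. indicator B x * F is x) \<and> integrable lborel (\<lambda>y. indicator A y * H is y) \<and>
      (\<integral> x. indicator B x * F is x \<partial>PL) = (\<integral> y. indicator A y * H is y \<partial>lborel)" if "is \<in> S" for "is"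
      using K1[OF _ _ A, of "is"] Sp[OF that] unfolding B_def PL_def sumf_def F_def I_def by auto
    have "(\<integral> x. indicator B x * f x \<partial>PL) = (\<integral> x. (\<Sum>is\<in>S. p is * (indicator B x * F is x)) \<partial>PL)"
      unfolding f_eq by (simp add: sum_distrib_left mult_ac)
    also have "\<dots> = (\<Sum>is\<in>S. (\<integral> x. p is * (indicator B x * F is x) \<partial>PL))"
      by (rule Bochner_Integration.integral_sum) (use K in auto)
    also have "\<dots> = (\<Sum>is\<in>S. p is * (\<integral> x. indicator B x * F is x \<partial>PL))"
      by simp
    also have "\<dots> = (\<Sum>is\<in>S. p is * (\<integral> y. indicator A y * H is y \<partial>lborel))"
      using K by auto
    also have "\<dots> = (\<Sum>is\<in>S. (\<integral> y. p is * (indicator A y * H is y) \<partial>lborel))"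
      by simp
    also have "\<dots> = (\<integral> y. (\<Sum>is\<in>S. p is * (indicator A y * H is y)) \<partial>lborel)"
      by (rule Bochner_Integration.integral_sum[symmetric]) (use K in auto)
    also have "\<dots> = (\<integral> y. indicator A y * htot y \<partial>lborel)"
      unfolding htot_def by (simp add: sum_distrib_left mult_ac)
    finally have eq: "(\<integral> x. indicator B x * f x \<partial>PL) = (\<integral> y. indicator A y * htot y \<partial>lborel)" .
    have "integrable lborel (\<lambda>y. \<Sum>is\<in>S. p is * (indicator A y * H is y))"
      using K by auto
    moreover have "(\<lambda>y. \<Sum>is\<in>S. p is * (indicator A y * H is y)) = (\<lambda>y. indicator A y * htot y)"
      unfolding htot_def by (simp add: sum_distrib_left mult_ac)
    ultimately show ?thesis using eq unfolding B_def by simp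
  qed
  define Phi where "Phi y = (\<Sum>is\<in>S. p is * ser (mcoef (big_alpha al Tm is) (big_T al Tm tv is) (big_t tv Tm is)) y)" for y
  have Phi_cont: "isCont Phi y" for y
    unfolding Phi_def using Sp
    by (intro isCont_sum ballI isCont_mult continuous_const ser_isCont H_gbound) auto
  have htot_Phi: "htot y = Phi y" if "0 \<le> y" for y
    unfolding htot_def Phi_def using Sp that by (intro sum.cong refl) (auto simp: H_alt)
  have htot_nn: "0 \<le> htot y" for y
  proof (rule ccontr)
    assume neg: "\<not> 0 \<le> htot y"
    have y: "0 \<le> y"
    proof (rule ccontr)
      assume "\<not> 0 \<le> y"
      then have "htot y = 0" unfolding htot_def Hf_def by (simp add: me_fun_neg)
      with neg show False by simp
    qed
    define e where "e = - Phi y / 2"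
    have e: "0 < e" using neg htot_Phi[OF y] unfolding e_def by simp
    obtain d where d: "0 < d" and dd: "\<And>x'. dist x' y < d \<Longrightarrow> dist (Phi x') (Phi y) < e"
      using Phi_cont[of y] e unfolding continuous_at_eps_delta by blast
    define A where "A = {y..y + d / 2}"
    have bound: "indicator A x * htot x \<le> (- e) * indicator A x" for x
    proof (cases "x \<in> A")
      case True
      then have x0: "0 \<le> x" and dx: "dist x y < d" using y d unfolding A_def by (auto simp: dist_real_def)
      have "dist (Phi x) (Phi y) < e" by (rule dd[OF dx])
      then have "Phi x < - e" unfolding e_def dist_real_def by simp
      then show ?thesis using True htot_Phi[OF x0] by simp
    next
      case False then show ?thesis by simp
    qed
    have AB: "A \<in> sets borel" unfolding A_def by simp
    have iA: "integrable lborel (\<lambda>x. (- e) * indicator A x)"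
      unfolding A_def by (rule borel_integrable_atLeastAtMost) simp
    have "(\<integral> x. indicator A x * htot x \<partial>lborel) \<le> (\<integral> x. (- e) * indicator A x \<partial>lborel)"
      by (rule integral_mono[OF conjunct1[OF KEY[OF AB]] iA bound])
    also have "\<dots> = - e * (d / 2)" unfolding A_def using d by simp
    also have "\<dots> < 0" using e d by (simp add: mult_pos_pos)
    finally have lt: "(\<integral> x. indicator A x * htot x \<partial>lborel) < 0" .
    have "0 \<le> (\<integral> x. indicator (sumf -` A \<inter> space PL) x * f x \<partial>PL)"
      using f_nn by simp
    with lt KEY[OF AB] show False by simp
  qed
  have Xm: "X \<in> measurable Pr PL" unfolding PL_def I_def using distributed_measurable[OF dist] .
  have sfm: "sumf \<in> measurable PL lborel"
    unfolding sumf_def PL_def using sum_meas[of I] by simp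
  have sumeq: "(\<lambda>\<omega>. \<Sum>j<M. X \<omega> j) = sumf \<circ> X"
    unfolding sumf_def I_def by (auto simp: fun_eq_iff lessThan_atLeast0)
  have dX: "distr Pr PL X = density PL (\<lambda>x. ennreal (f x))"
    unfolding PL_def I_def by (rule distributed_distr_eq_density[OF dist])
  have PLprob: "prob_space (density PL (\<lambda>x. ennreal (f x)))"
    using prob_space.prob_space_distr[OF \<open>prob_space Pr\<close> Xm] dX by simp
  have fmeas: "f \<in> borel_measurable PL"
  proof -
    have "(\<lambda>x. \<Sum>is\<in>S. p is * F is x) \<in> borel_measurable PL"
    proof (intro borel_measurable_sum borel_measurable_times borel_measurable_const)
      fix "is" assume "is \<in> S"
      then show "F is \<in> borel_measurable PL"
        using Fprod_meas[of "is"] Sp unfolding F_def PL_def I_def by auto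
    qed
    then show ?thesis unfolding f_eq[abs_def] by simp
  qed
  have DIST: "distributed Pr lborel (\<lambda>\<omega>. \<Sum>j<M. X \<omega> j) (\<lambda>y. ennreal (htot y))"
    unfolding distributed_def
  proof (intro conjI)
    show "(\<lambda>y. ennreal (htot y)) \<in> borel_measurable lborel" using htot_meas by simp
    show "(\<lambda>\<omega>. \<Sum>j<M. X \<omega> j) \<in> Pr \<rightarrow>\<^sub>M lborel"
      unfolding sumeq using sfm Xm by (rule measurable_comp[rotated])
    have "distr Pr lborel (\<lambda>\<omega>. \<Sum>j<M. X \<omega> j) = distr (distr Pr PL X) lborel sumf"
      unfolding sumeq by (rule distr_distr[OF sfm Xm, symmetric])
    also have "\<dots> = distr (density PL (\<lambda>x. ennreal (f x))) lborel sumf" unfolding dX ..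
    also have "\<dots> = density lborel (\<lambda>y. ennreal (htot y))"
    proof (rule measure_eqI)
      show "sets (distr (density PL (\<lambda>x. ennreal (f x))) lborel sumf) = sets (density lborel (\<lambda>y. ennreal (htot y)))"
        by simp
      fix A assume "A \<in> sets (distr (density PL (\<lambda>x. ennreal (f x))) lborel sumf)"
      then have A: "A \<in> sets borel" by simp
      define B where "B = sumf -` A \<inter> space PL"
      have BS: "B \<in> sets PL" unfolding B_def using sfm A by measurable
      have "emeasure (distr (density PL (\<lambda>x. ennreal (f x))) lborel sumf) A = emeasure (density PL (\<lambda>x. ennreal (f x))) B"
        unfolding B_def using sfm A by (subst emeasure_distr) auto
      also have "\<dots> = (\<integral>\<^sup>+ x. ennreal (f x) * indicator B x \<partial>PL)"
        using fmeas BS by (subst emeasure_density) auto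
      finally have e1: "emeasure (distr (density PL (\<lambda>x. ennreal (f x))) lborel sumf) A = (\<integral>\<^sup>+ x. ennreal (f x) * indicator B x \<partial>PL)" .
      have fin: "(\<integral>\<^sup>+ x. ennreal (f x) * indicator B x \<partial>PL) < \<infinity>"
      proof -
        have "emeasure (density PL (\<lambda>x. ennreal (f x))) B \<le> 1"
          by (rule prob_space.emeasure_le_1[OF PLprob])
        moreover have "emeasure (density PL (\<lambda>x. ennreal (f x))) B = (\<integral>\<^sup>+ x. ennreal (f x) * indicator B x \<partial>PL)"
          using fmeas BS by (subst emeasure_density) auto
        ultimately show ?thesis by (simp add: order_le_less_trans)
      qed
      have R1: "integrable PL (\<lambda>x. indicator B x * f x) \<and>
        ennreal (\<integral> x. indicator B x * f x \<partial>PL) = (\<integral>\<^sup>+ x. ennreal (f x) * indicator B x \<partial>PL)"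
        by (rule nn_real_helper[OF fmeas f_nn BS fin])
      have "(\<integral>\<^sup>+ y. ennreal (htot y) * indicator A y \<partial>lborel) = (\<integral>\<^sup>+ y. ennreal (indicator A y * htot y) \<partial>lborel)"
        by (intro nn_integral_cong) (auto split: split_indicator)
      also have "\<dots> = ennreal (\<integral> y. indicator A y * htot y \<partial>lborel)"
        by (rule nn_integral_eq_integral[OF conjunct1[OF KEY[OF A]]]) (use htot_nn in auto)
      also have "\<dots> = ennreal (\<integral> x. indicator B x * f x \<partial>PL)"
        using KEY[OF A] unfolding B_def by simp
      also have "\<dots> = emeasure (distr (density PL (\<lambda>x. ennreal (f x))) lborel sumf) A"
        using R1 e1 by simp
      finally have e2: "(\<integral>\<^sup>+ y. ennreal (htot y) * indicator A y \<partial>lborel) = emeasure (distr (density PL (\<lambda>x. ennreal (f x))) lborel sumf) A" .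
      have "emeasure (density lborel (\<lambda>y. ennreal (htot y))) A = (\<integral>\<^sup>+ y. ennreal (htot y) * indicator A y \<partial>lborel)"
        using htot_meas A by (subst emeasure_density) auto
      with e2 show "emeasure (distr (density PL (\<lambda>x. ennreal (f x))) lborel sumf) A = emeasure (density lborel (\<lambda>y. ennreal (htot y))) A"
        by simp
    qed
    finally show "distr Pr lborel (\<lambda>\<omega>. \<Sum>j<M. X \<omega> j) = density lborel (\<lambda>y. ennreal (htot y))" .
  qed
  have MEAM: "MEam htot"
  proof -
    obtain e where e: "bij_betw e {0..<card S} S" using ex_bij_betw_nat_finite[OF finS] by blast
    have eS: "e k \<in> S" if "k < card S" for k using e that unfolding bij_betw_def by auto
    show ?thesis unfolding MEam_def
    proof (intro conjI exI[of _ "card S"] exI[of _ "\<lambda>k. p (e k)"] exI[of _ "\<lambda>k. H (e k)"])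
      show "\<forall>y. 0 \<le> htot y" using htot_nn by blast
      show "\<forall>k<card S. me_density (H (e k))"
        using eS Sp H_me_density by blast
      show "(\<Sum>k<card S. p (e k)) = 1"
        using sum.reindex_bij_betw[OF e, of p] psum unfolding S_def[symmetric] by (simp add: lessThan_atLeast0)
      show "\<forall>y. htot y = (\<Sum>k<card S. p (e k) * H (e k) y)"
      proof
        fix y
        show "htot y = (\<Sum>k<card S. p (e k) * H (e k) y)"
        using sum.reindex_bij_betw[OF e, of "\<lambda>is. p is * H is y"] unfolding htot_def by (simp add: lessThan_atLeast0)
      qed
    qed
  qed
  from MEAM DIST show ?thesis unfolding htot_eq[symmetric] by (rule conjI)
qed

end
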